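(* If $R$ is an Artinian ring of finite Ext-index, then $R_\mathfrak{p}$ is of finite Ext-index for every prime ideal $\mathfrak{p}$ of $R$.
   Context: All rings are commutative Noetherian with unity. For a ring $A$ and nonzero $A$-modules $M,N$, set $p^A(M,N)=\sup\{i\in\mathbb{N} : \mathrm{Ext}^i_A(M,N)\neq 0\}\ (\leq\infty)$. The Ext-index of $A$ is $\mathrm{Ext}\text{-}\mathrm{index}(A)=\sup\{p^A(M,N) : M,N \text{ finitely generated } A\text{-modules with } p^A(M,N)<\infty\}$, and $A$ is of finite Ext-index if this is finite. *)

theory Defs
  imports "HOL-Algebra.Algebra" "HOL-Library.Extended_Nat"
begin

definition artinian_ring :: "('a, 'm) ring_scheme \<Rightarrow> bool" where
  "artinian_ring R \<longleftrightarrow> ring R \<and>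
     \<not> (\<exists>I :: nat \<Rightarrow> 'a set. \<forall>n. ideal (I n) R \<and> I (Suc n) \<subset> I n)"

definition loc_rel :: "('a, 'm) ring_scheme \<Rightarrow> 'a set \<Rightarrow> (('a \<times> 'a) \<times> ('a \<times> 'a)) set" where
  "loc_rel R P = {((a, s), (b, t)).
     a \<in> carrier R \<and> s \<in> carrier R - P \<and> b \<in> carrier R \<and> t \<in> carrier R - P \<and>
     (\<exists>u \<in> carrier R - P. u \<otimes>\<^bsub>R\<^esub> ((a \<otimes>\<^bsub>R\<^esub> t) \<ominus>\<^bsub>R\<^esub> (b \<otimes>\<^bsub>R\<^esub> s)) = \<zero>\<^bsub>R\<^esub>)}"

definition loc_mult :: "('a, 'm) ring_scheme \<Rightarrow> 'a set \<Rightarrow> ('a \<times> 'a) set \<Rightarrow> ('a \<times> 'a) set \<Rightarrow> ('a \<times> 'a) set" where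
  "loc_mult R P U V = (\<Union>((\<lambda>((a, s), (b, t)). loc_rel R P `` {(a \<otimes>\<^bsub>R\<^esub> b, s \<otimes>\<^bsub>R\<^esub> t)}) ` (U \<times> V)))"

definition loc_add :: "('a, 'm) ring_scheme \<Rightarrow> 'a set \<Rightarrow> ('a \<times> 'a) set \<Rightarrow> ('a \<times> 'a) set \<Rightarrow> ('a \<times> 'a) set" where
  "loc_add R P U V = (\<Union>((\<lambda>((a, s), (b, t)). loc_rel R P `` {((a \<otimes>\<^bsub>R\<^esub> t) \<oplus>\<^bsub>R\<^esub> (b \<otimes>\<^bsub>R\<^esub> s), s \<otimes>\<^bsub>R\<^esub> t)}) ` (U \<times> V)))"

definition localization :: "('a, 'm) ring_scheme \<Rightarrow> 'a set \<Rightarrow> ('a \<times> 'a) set ring" where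
  "localization R P =
    \<lparr> carrier = (carrier R \<times> (carrier R - P)) // loc_rel R P,
      monoid.mult = loc_mult R P,
      one = loc_rel R P `` {(\<one>\<^bsub>R\<^esub>, \<one>\<^bsub>R\<^esub>)},
      ring.zero = loc_rel R P `` {(\<zero>\<^bsub>R\<^esub>, \<one>\<^bsub>R\<^esub>)},
      ring.add = loc_add R P \<rparr>"

text \<open>Elements of the free module A^n are functions nat => carrier, zero from index n on.
A matrix with m rows and n columns is a function nat => nat => 'a and acts A^n -> A^m.\<close>

definition fvec :: "('a, 'm) ring_scheme \<Rightarrow> nat \<Rightarrow> (nat \<Rightarrow> 'a) set" where
  "fvec R n = {v. (\<forall>i<n. v i \<in> carrier R) \<and> (\<forall>i\<ge>n. v i = \<zero>\<^bsub>R\<^esub>)}"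

definition is_mat :: "('a, 'm) ring_scheme \<Rightarrow> nat \<Rightarrow> nat \<Rightarrow> (nat \<Rightarrow> nat \<Rightarrow> 'a) \<Rightarrow> bool" where
  "is_mat R m n D \<longleftrightarrow> (\<forall>i<m. \<forall>j<n. D i j \<in> carrier R)"

definition mv :: "('a, 'm) ring_scheme \<Rightarrow> nat \<Rightarrow> nat \<Rightarrow> (nat \<Rightarrow> nat \<Rightarrow> 'a) \<Rightarrow> (nat \<Rightarrow> 'a) \<Rightarrow> (nat \<Rightarrow> 'a)" where
  "mv R m n D v = (\<lambda>i. if i < m then (\<Oplus>\<^bsub>R\<^esub> j\<in>{..<n}. D i j \<otimes>\<^bsub>R\<^esub> v j) else \<zero>\<^bsub>R\<^esub>)"

definition mimg :: "('a, 'm) ring_scheme \<Rightarrow> nat \<Rightarrow> nat \<Rightarrow> (nat \<Rightarrow> nat \<Rightarrow> 'a) \<Rightarrow> (nat \<Rightarrow> 'a) set" where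
  "mimg R m n D = mv R m n D ` fvec R n"

definition vsub :: "('a, 'm) ring_scheme \<Rightarrow> (nat \<Rightarrow> 'a) \<Rightarrow> (nat \<Rightarrow> 'a) \<Rightarrow> (nat \<Rightarrow> 'a)" where
  "vsub R v w = (\<lambda>i. v i \<ominus>\<^bsub>R\<^esub> w i)"

text \<open>A free resolution by finitely generated free modules
  ... -> A^(r 2) --d 1--> A^(r 1) --d 0--> A^(r 0) -> M -> 0 ,
  where d k is an (r k) x (r (k+1)) matrix and M = coker (d 0).
Since A is Noetherian, every finitely generated module M admits such a resolution,
and every such resolution determines the finitely generated module coker (d 0).\<close>
definition free_resolution :: "('a, 'm) ring_scheme \<Rightarrow> (nat \<Rightarrow> nat) \<Rightarrow> (nat \<Rightarrow> nat \<Rightarrow> nat \<Rightarrow> 'a) \<Rightarrow> bool" where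
  "free_resolution R r d \<longleftrightarrow>
     (\<forall>k. is_mat R (r k) (r (Suc k)) (d k)) \<and>
     (\<forall>k. {v \<in> fvec R (r (Suc k)). mv R (r k) (r (Suc k)) (d k) v = (\<lambda>_. \<zero>\<^bsub>R\<^esub>)}
          = mimg R (r (Suc k)) (r (Suc (Suc k))) (d (Suc k)))"

definition res_nonzero :: "('a, 'm) ring_scheme \<Rightarrow> (nat \<Rightarrow> nat) \<Rightarrow> (nat \<Rightarrow> nat \<Rightarrow> nat \<Rightarrow> 'a) \<Rightarrow> bool" where
  "res_nonzero R r d \<longleftrightarrow> mimg R (r 0) (r 1) (d 0) \<noteq> fvec R (r 0)"

text \<open>A finitely generated module N is presented as N = A^p / image(psi),
with psi a p x q matrix. N is nonzero iff the image is proper.\<close>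
definition pres_nonzero :: "('a, 'm) ring_scheme \<Rightarrow> nat \<Rightarrow> nat \<Rightarrow> (nat \<Rightarrow> nat \<Rightarrow> 'a) \<Rightarrow> bool" where
  "pres_nonzero R p q \<psi> \<longleftrightarrow> is_mat R p q \<psi> \<and> mimg R p q \<psi> \<noteq> fvec R p"

text \<open>Hom(A^n, N) is identified with N^n: a cochain is a family u j (j < n) of
representatives in A^p of elements of N = A^p / image(psi).
The coboundary Hom(F_k,N) -> Hom(F_(k+1),N), f |-> f o d k, reads
(delta u) l = sum_j (d k j l) * u j.\<close>

definition cochain :: "('a, 'm) ring_scheme \<Rightarrow> nat \<Rightarrow> nat \<Rightarrow> (nat \<Rightarrow> nat \<Rightarrow> 'a) set" where
  "cochain R p n = {u. \<forall>j<n. u j \<in> fvec R p}"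

definition cobdry :: "('a, 'm) ring_scheme \<Rightarrow> nat \<Rightarrow> (nat \<Rightarrow> nat \<Rightarrow> 'a) \<Rightarrow> (nat \<Rightarrow> nat \<Rightarrow> 'a) \<Rightarrow> (nat \<Rightarrow> nat \<Rightarrow> 'a)" where
  "cobdry R n D u = (\<lambda>l i. \<Oplus>\<^bsub>R\<^esub> j\<in>{..<n}. D j l \<otimes>\<^bsub>R\<^esub> u j i)"

text \<open>Ext^k_A(M,N) \<noteq> 0, computed as the k-th cohomology of Hom(F,N).\<close>
definition ext_nonzero :: "('a, 'm) ring_scheme \<Rightarrow> (nat \<Rightarrow> nat) \<Rightarrow> (nat \<Rightarrow> nat \<Rightarrow> nat \<Rightarrow> 'a)
    \<Rightarrow> nat \<Rightarrow> nat \<Rightarrow> (nat \<Rightarrow> nat \<Rightarrow> 'a) \<Rightarrow> nat \<Rightarrow> bool" where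
  "ext_nonzero R r d p q \<psi> k \<longleftrightarrow>
     (\<exists>u \<in> cochain R p (r k).
        (\<forall>l < r (Suc k). cobdry R (r k) (d k) u l \<in> mimg R p q \<psi>) \<and>
        \<not> (case k of
              0 \<Rightarrow> (\<forall>j < r 0. u j \<in> mimg R p q \<psi>)
            | Suc k' \<Rightarrow> (\<exists>w \<in> cochain R p (r k').
                 \<forall>j < r k. vsub R (u j) (cobdry R (r k') (d k') w j) \<in> mimg R p q \<psi>)))"

definition ext_sup :: "('a, 'm) ring_scheme \<Rightarrow> (nat \<Rightarrow> nat) \<Rightarrow> (nat \<Rightarrow> nat \<Rightarrow> nat \<Rightarrow> 'a)
    \<Rightarrow> nat \<Rightarrow> nat \<Rightarrow> (nat \<Rightarrow> nat \<Rightarrow> 'a) \<Rightarrow> enat" where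
  "ext_sup R r d p q \<psi> = Sup (enat ` {k. ext_nonzero R r d p q \<psi> k})"

definition ext_index :: "('a, 'm) ring_scheme \<Rightarrow> enat" where
  "ext_index R = Sup {ext_sup R r d p q \<psi> | r d p q \<psi>.
      free_resolution R r d \<and> res_nonzero R r d \<and> pres_nonzero R p q \<psi> \<and>
      ext_sup R r d p q \<psi> < \<infinity>}"

definition finite_ext_index :: "('a, 'm) ring_scheme \<Rightarrow> bool" where
  "finite_ext_index R \<longleftrightarrow> ext_index R < \<infinity>"

end

theory Submission
  imports Defs
begin



locale artloc = primeideal P R for P and R (structure) +
  assumes art: "artinian_ring R" and noeth: "noetherian_ring R"
begin

lemma notP_mult: "\<lbrakk>a \<in> carrier R - P; b \<in> carrier R - P\<rbrakk> \<Longrightarrow> a \<otimes> b \<in> carrier R - P"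
  using I_prime by auto

lemma one_notP: "\<one> \<in> carrier R - P"
  using I_notcarr one_imp_carrier by auto

lemma rel_iff: "((a, s), (b, t)) \<in> loc_rel R P \<longleftrightarrow>
     a \<in> carrier R \<and> s \<in> carrier R - P \<and> b \<in> carrier R \<and> t \<in> carrier R - P \<and>
     (\<exists>u \<in> carrier R - P. u \<otimes> ((a \<otimes> t) \<ominus> (b \<otimes> s)) = \<zero>)"
  unfolding loc_rel_def by auto

lemma trans_aux:
  assumes c: "a \<in> carrier R" "s \<in> carrier R" "b \<in> carrier R" "t \<in> carrier R" "c \<in> carrier R" "w \<in> carrier R"
    "u \<in> carrier R" "v \<in> carrier R"
    and h1: "u \<otimes> ((a \<otimes> t) \<ominus> (b \<otimes> s)) = \<zero>" and h2: "v \<otimes> ((b \<otimes> w) \<ominus> (c \<otimes> t)) = \<zero>"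
  shows "(u \<otimes> v \<otimes> t) \<otimes> ((a \<otimes> w) \<ominus> (c \<otimes> s)) = \<zero>"
proof -
  have "(u \<otimes> v \<otimes> t) \<otimes> ((a \<otimes> w) \<ominus> (c \<otimes> s)) = v \<otimes> w \<otimes> (u \<otimes> ((a \<otimes> t) \<ominus> (b \<otimes> s))) \<oplus> u \<otimes> s \<otimes> (v \<otimes> ((b \<otimes> w) \<ominus> (c \<otimes> t)))"
    using c by algebra
  also have "\<dots> = \<zero>" using h1 h2 c by simp
  finally show ?thesis .
qed

lemma loc_equiv: "equiv (carrier R \<times> (carrier R - P)) (loc_rel R P)"
proof (rule equivI)
  show "loc_rel R P \<subseteq> (carrier R \<times> (carrier R - P)) \<times> (carrier R \<times> (carrier R - P))"
      unfolding loc_rel_def by auto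
next
  show "refl_on (carrier R \<times> (carrier R - P)) (loc_rel R P)"
  proof (rule refl_onI)
    fix x assume "x \<in> carrier R \<times> (carrier R - P)"
    then obtain a s where x: "x = (a, s)" "a \<in> carrier R" "s \<in> carrier R - P" by auto
    have "\<one> \<otimes> ((a \<otimes> s) \<ominus> (a \<otimes> s)) = \<zero>" using x by (simp add: r_neg minus_eq)
    then show "(x, x) \<in> loc_rel R P" unfolding x(1) rel_iff using x one_notP by blast
  qed
next
  show "sym (loc_rel R P)"
  proof (rule symI)
    fix x y assume "(x, y) \<in> loc_rel R P"
    then obtain a s b t u where xy: "x = (a, s)" "y = (b, t)" "a \<in> carrier R" "s \<in> carrier R - P"
      "b \<in> carrier R" "t \<in> carrier R - P" "u \<in> carrier R - P" "u \<otimes> ((a \<otimes> t) \<ominus> (b \<otimes> s)) = \<zero>"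
      unfolding loc_rel_def by auto
    have c: "a \<in> carrier R" "s \<in> carrier R" "b \<in> carrier R" "t \<in> carrier R" "u \<in> carrier R"
      using xy by auto
    have "u \<otimes> ((b \<otimes> s) \<ominus> (a \<otimes> t)) = \<ominus> (u \<otimes> ((a \<otimes> t) \<ominus> (b \<otimes> s)))"
      using c by algebra
    then have "u \<otimes> ((b \<otimes> s) \<ominus> (a \<otimes> t)) = \<zero>" using xy by simp
    then show "(y, x) \<in> loc_rel R P" unfolding xy(1,2) rel_iff using xy by blast
  qed
next
  show "trans (loc_rel R P)"
  proof (rule transI)
    fix x y z assume "(x, y) \<in> loc_rel R P" "(y, z) \<in> loc_rel R P"
    then obtain a s b t c w u v where xy: "x = (a, s)" "y = (b, t)" "z = (c, w)" "a \<in> carrier R" "s \<in> carrier R - P"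
      "b \<in> carrier R" "t \<in> carrier R - P" "c \<in> carrier R" "w \<in> carrier R - P"
      "u \<in> carrier R - P" "u \<otimes> ((a \<otimes> t) \<ominus> (b \<otimes> s)) = \<zero>"
      "v \<in> carrier R - P" "v \<otimes> ((b \<otimes> w) \<ominus> (c \<otimes> t)) = \<zero>"
      unfolding loc_rel_def by auto
    have "(u \<otimes> v \<otimes> t) \<otimes> ((a \<otimes> w) \<ominus> (c \<otimes> s)) = \<zero>"
      by (rule trans_aux) (use xy in auto)
    moreover have "u \<otimes> v \<otimes> t \<in> carrier R - P" using xy notP_mult by auto
    ultimately show "(x, z) \<in> loc_rel R P" unfolding xy(1,3) rel_iff using xy by blast
  qed
qed

definition lpi :: "'a \<Rightarrow> ('a \<times> 'a) set" where
  "lpi x = loc_rel R P `` {(x, \<one>)}"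

lemma lpi_mem: "(a, s) \<in> lpi x \<longleftrightarrow> ((x, \<one>), (a, s)) \<in> loc_rel R P"
  unfolding lpi_def by simp

lemma lpi_eq_iff:
  assumes "x \<in> carrier R" "y \<in> carrier R"
  shows "lpi x = lpi y \<longleftrightarrow> (\<exists>u \<in> carrier R - P. u \<otimes> (x \<ominus> y) = \<zero>)"
proof -
  have "lpi x = lpi y \<longleftrightarrow> ((x, \<one>), (y, \<one>)) \<in> loc_rel R P"
    unfolding lpi_def using eq_equiv_class_iff[OF loc_equiv] assms one_notP by auto
  also have "\<dots> \<longleftrightarrow> (\<exists>u \<in> carrier R - P. u \<otimes> (x \<ominus> y) = \<zero>)"
    unfolding rel_iff using assms one_notP by simp
  finally show ?thesis .
qed

lemma class_eq_lpi:
  assumes "((x, \<one>), (a, s)) \<in> loc_rel R P"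
  shows "loc_rel R P `` {(a, s)} = lpi x"
  unfolding lpi_def using assms equiv_class_eq_iff[OF loc_equiv] by metis

lemma lpi_self: "x \<in> carrier R \<Longrightarrow> (x, \<one>) \<in> lpi x"
  unfolding lpi_def using equiv_class_self[OF loc_equiv] one_notP by auto

lemma artinian_stab:
  assumes s: "s \<in> carrier R"
  shows "\<exists>n. \<exists>t \<in> carrier R. s [^] n = s [^] (Suc n) \<otimes> t"
proof (rule ccontr)
  assume H: "\<not> ?thesis"
  define I where "I n = PIdl (s [^] (n::nat))" for n
  have "\<forall>n. ideal (I n) R \<and> I (Suc n) \<subset> I n"
  proof
    fix n
    have id: "ideal (I n) R" unfolding I_def using cgenideal_ideal s by auto
    have sub: "I (Suc n) \<subseteq> I n"
    proof
      fix z assume "z \<in> I (Suc n)"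
      then obtain x where x: "x \<in> carrier R" "z = x \<otimes> s [^] Suc n" unfolding I_def cgenideal_def by auto
      moreover have "s [^] n \<in> carrier R" using s by simp
      ultimately have "z = (x \<otimes> s) \<otimes> s [^] n" using s x by (simp only: nat_pow_Suc) algebra
      then show "z \<in> I n" unfolding I_def cgenideal_def using x s by blast
    qed
    have "s [^] n \<in> I n" unfolding I_def cgenideal_def using s by (auto intro!: exI[of _ \<one>])
    moreover have "s [^] n \<notin> I (Suc n)"
    proof
      assume "s [^] n \<in> I (Suc n)"
      then obtain x where x: "x \<in> carrier R" "s [^] n = x \<otimes> s [^] Suc n" unfolding I_def cgenideal_def by auto
      then have "s [^] n = s [^] Suc n \<otimes> x" using s by (simp add: m_comm)
      then show False using H x by blast
    qed
    ultimately show "ideal (I n) R \<and> I (Suc n) \<subset> I n"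
      using sub id by auto
  qed
  then show False using art unfolding artinian_ring_def by blast
qed

lemma pow_notP: "s \<in> carrier R - P \<Longrightarrow> s [^] (n::nat) \<in> carrier R - P"
proof (induction n)
  case 0 then show ?case using one_notP by simp
next
  case (Suc n) then show ?case using notP_mult[of "s [^] n" s] by simp
qed

end



lemma hom_image_cring:
  fixes R :: "('a, 'm) ring_scheme" and S :: "('b, 'n) ring_scheme"
  assumes R: "cring R" and car: "carrier S = h ` carrier R"
    and add: "\<And>x y. x \<in> carrier R \<Longrightarrow> y \<in> carrier R \<Longrightarrow> h (x \<oplus>\<^bsub>R\<^esub> y) = h x \<oplus>\<^bsub>S\<^esub> h y"
    and mul: "\<And>x y. x \<in> carrier R \<Longrightarrow> y \<in> carrier R \<Longrightarrow> h (x \<otimes>\<^bsub>R\<^esub> y) = h x \<otimes>\<^bsub>S\<^esub> h y"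
    and one: "h \<one>\<^bsub>R\<^esub> = \<one>\<^bsub>S\<^esub>" and zero: "h \<zero>\<^bsub>R\<^esub> = \<zero>\<^bsub>S\<^esub>"
  shows "cring S" "h \<in> ring_hom R S"
proof -
  interpret R: cring R by (rule R)
  have E: "\<And>x. x \<in> carrier S \<Longrightarrow> \<exists>a \<in> carrier R. x = h a" using car by auto
  have I: "\<And>a. a \<in> carrier R \<Longrightarrow> h a \<in> carrier S" using car by auto
  show "cring S"
  proof (rule cringI)
    show "abelian_group S"
    proof (rule abelian_groupI)
      fix x y assume "x \<in> carrier S" "y \<in> carrier S"
      then obtain a b where ab: "a \<in> carrier R" "b \<in> carrier R" "x = h a" "y = h b" using E by blast
      show "x \<oplus>\<^bsub>S\<^esub> y \<in> carrier S" unfolding ab(3,4) add[OF ab(1,2), symmetric] using ab by (simp add: I)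
    next
      show "\<zero>\<^bsub>S\<^esub> \<in> carrier S" unfolding zero[symmetric] by (simp add: I)
    next
      fix x y z assume "x \<in> carrier S" "y \<in> carrier S" "z \<in> carrier S"
      then obtain a b c where ab: "a \<in> carrier R" "b \<in> carrier R" "c \<in> carrier R" "x = h a" "y = h b" "z = h c" using E by meson
      show "x \<oplus>\<^bsub>S\<^esub> y \<oplus>\<^bsub>S\<^esub> z = x \<oplus>\<^bsub>S\<^esub> (y \<oplus>\<^bsub>S\<^esub> z)"
        unfolding ab(4-6) add[OF ab(1,2), symmetric] add[OF ab(2,3), symmetric]
        using ab by (simp add: add[symmetric] R.a_assoc)
    next
      fix x y assume "x \<in> carrier S" "y \<in> carrier S"
      then obtain a b where ab: "a \<in> carrier R" "b \<in> carrier R" "x = h a" "y = h b" using E by blast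
      show "x \<oplus>\<^bsub>S\<^esub> y = y \<oplus>\<^bsub>S\<^esub> x" unfolding ab(3,4) add[OF ab(1,2), symmetric] add[OF ab(2,1), symmetric]
        using ab by (simp add: R.a_comm)
    next
      fix x assume "x \<in> carrier S"
      then obtain a where ab: "a \<in> carrier R" "x = h a" using E by blast
      show "\<zero>\<^bsub>S\<^esub> \<oplus>\<^bsub>S\<^esub> x = x" unfolding ab(2) zero[symmetric] add[OF R.zero_closed ab(1), symmetric]
        using ab by simp
    next
      fix x assume "x \<in> carrier S"
      then obtain a where a: "a \<in> carrier R" "x = h a" using E by blast
      have "h (\<ominus>\<^bsub>R\<^esub> a) \<oplus>\<^bsub>S\<^esub> x = \<zero>\<^bsub>S\<^esub>" unfolding a(2) add[OF R.a_inv_closed[OF a(1)] a(1), symmetric] zero[symmetric]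
        using a by (simp add: R.l_neg)
      then show "\<exists>y\<in>carrier S. y \<oplus>\<^bsub>S\<^esub> x = \<zero>\<^bsub>S\<^esub>" using I a R.a_inv_closed by blast
    qed
  next
    show "comm_monoid S"
    proof (rule comm_monoidI)
      fix x y assume "x \<in> carrier S" "y \<in> carrier S"
      then obtain a b where ab: "a \<in> carrier R" "b \<in> carrier R" "x = h a" "y = h b" using E by blast
      show "x \<otimes>\<^bsub>S\<^esub> y \<in> carrier S" unfolding ab(3,4) mul[OF ab(1,2), symmetric] using ab by (simp add: I)
    next
      show "\<one>\<^bsub>S\<^esub> \<in> carrier S" unfolding one[symmetric] by (simp add: I)
    next
      fix x y z assume "x \<in> carrier S" "y \<in> carrier S" "z \<in> carrier S"
      then obtain a b c where ab: "a \<in> carrier R" "b \<in> carrier R" "c \<in> carrier R" "x = h a" "y = h b" "z = h c" using E by meson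
      show "x \<otimes>\<^bsub>S\<^esub> y \<otimes>\<^bsub>S\<^esub> z = x \<otimes>\<^bsub>S\<^esub> (y \<otimes>\<^bsub>S\<^esub> z)"
        unfolding ab(4-6) mul[OF ab(1,2), symmetric] mul[OF ab(2,3), symmetric]
        using ab by (simp add: mul[symmetric] R.m_assoc)
    next
      fix x assume "x \<in> carrier S"
      then obtain a where ab: "a \<in> carrier R" "x = h a" using E by blast
      show "\<one>\<^bsub>S\<^esub> \<otimes>\<^bsub>S\<^esub> x = x" unfolding ab(2) one[symmetric] mul[OF R.one_closed ab(1), symmetric]
        using ab by simp
    next
      fix x y assume "x \<in> carrier S" "y \<in> carrier S"
      then obtain a b where ab: "a \<in> carrier R" "b \<in> carrier R" "x = h a" "y = h b" using E by blast
      show "x \<otimes>\<^bsub>S\<^esub> y = y \<otimes>\<^bsub>S\<^esub> x" unfolding ab(3,4) mul[OF ab(1,2), symmetric] mul[OF ab(2,1), symmetric]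
        using ab by (simp add: R.m_comm)
    qed
  next
    fix x y z assume "x \<in> carrier S" "y \<in> carrier S" "z \<in> carrier S"
    then obtain a b c where ab: "a \<in> carrier R" "b \<in> carrier R" "c \<in> carrier R" "x = h a" "y = h b" "z = h c" using E by meson
    show "(x \<oplus>\<^bsub>S\<^esub> y) \<otimes>\<^bsub>S\<^esub> z = x \<otimes>\<^bsub>S\<^esub> z \<oplus>\<^bsub>S\<^esub> y \<otimes>\<^bsub>S\<^esub> z"
      unfolding ab(4-6) add[OF ab(1,2), symmetric] mul[OF ab(1,3), symmetric] mul[OF ab(2,3), symmetric]
      using ab by (simp add: mul[symmetric] add[symmetric] R.l_distr)
  qed
  show "h \<in> ring_hom R S"
    by (rule ring_hom_memI) (auto simp: I mul add one)
qed

context artloc begin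

lemma lpi_surj:
  assumes a: "a \<in> carrier R" and s: "s \<in> carrier R - P"
  shows "\<exists>x \<in> carrier R. loc_rel R P `` {(a, s)} = lpi x"
proof -
  obtain n t where t: "t \<in> carrier R" "s [^] n = s [^] Suc n \<otimes> t"
    using artinian_stab s by blast
  define p where "p = s [^] n"
  have p: "p \<in> carrier R - P" unfolding p_def using pow_notP s by blast
  have sc: "s \<in> carrier R" using s by simp
  have pc: "p \<in> carrier R" using p by simp
  have ps: "p = p \<otimes> s \<otimes> t" using t unfolding p_def by (simp add: nat_pow_Suc)
  have "p \<otimes> ((a \<otimes> t) \<otimes> s \<ominus> a \<otimes> \<one>) = a \<otimes> (p \<otimes> s \<otimes> t) \<ominus> a \<otimes> p"
    using a sc pc t by algebra
  also have "\<dots> = \<zero>" using ps a pc by (simp add: r_neg minus_eq)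
  finally have "((a \<otimes> t, \<one>), (a, s)) \<in> loc_rel R P"
    unfolding rel_iff using p a s t one_notP by blast
  then show ?thesis using class_eq_lpi a t by blast
qed

lemma carrier_S: "carrier (localization R P) = lpi ` carrier R"
proof
  show "carrier (localization R P) \<subseteq> lpi ` carrier R"
  proof
    fix Y assume "Y \<in> carrier (localization R P)"
    then have "Y \<in> (carrier R \<times> (carrier R - P)) // loc_rel R P" by (simp add: localization_def)
    then obtain z where "Y = loc_rel R P `` {z}" "z \<in> carrier R \<times> (carrier R - P)" by (rule quotientE)
    then show "Y \<in> lpi ` carrier R" using lpi_surj by fastforce
  qed
next
  show "lpi ` carrier R \<subseteq> carrier (localization R P)"
    unfolding localization_def lpi_def using one_notP by (auto intro: quotientI)
qed

lemma add_rel: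
  assumes x: "x \<in> carrier R" and y: "y \<in> carrier R"
    and h1: "((x, \<one>), (a, s)) \<in> loc_rel R P" and h2: "((y, \<one>), (b, t)) \<in> loc_rel R P"
  shows "((x \<oplus> y, \<one>), ((a \<otimes> t) \<oplus> (b \<otimes> s), s \<otimes> t)) \<in> loc_rel R P"
proof -
  obtain u where u: "u \<in> carrier R - P" "u \<otimes> (x \<otimes> s \<ominus> a \<otimes> \<one>) = \<zero>" and c1: "a \<in> carrier R" "s \<in> carrier R - P"
    using h1 unfolding rel_iff by blast
  obtain v where v: "v \<in> carrier R - P" "v \<otimes> (y \<otimes> t \<ominus> b \<otimes> \<one>) = \<zero>" and c2: "b \<in> carrier R" "t \<in> carrier R - P"
    using h2 unfolding rel_iff by blast
  have cc: "u \<in> carrier R" "v \<in> carrier R" "s \<in> carrier R" "t \<in> carrier R" using u v c1 c2 by auto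
  have "(u \<otimes> v) \<otimes> ((x \<oplus> y) \<otimes> (s \<otimes> t) \<ominus> ((a \<otimes> t) \<oplus> (b \<otimes> s)) \<otimes> \<one>)
      = v \<otimes> t \<otimes> (u \<otimes> (x \<otimes> s \<ominus> a \<otimes> \<one>)) \<oplus> u \<otimes> s \<otimes> (v \<otimes> (y \<otimes> t \<ominus> b \<otimes> \<one>))"
    using cc c1 c2 x y by algebra
  also have "\<dots> = \<zero>" using u v cc by simp
  finally show ?thesis unfolding rel_iff using u v c1 c2 x y notP_mult one_notP by auto
qed

lemma mult_rel:
  assumes x: "x \<in> carrier R" and y: "y \<in> carrier R"
    and h1: "((x, \<one>), (a, s)) \<in> loc_rel R P" and h2: "((y, \<one>), (b, t)) \<in> loc_rel R P"
  shows "((x \<otimes> y, \<one>), (a \<otimes> b, s \<otimes> t)) \<in> loc_rel R P"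
proof -
  obtain u where u: "u \<in> carrier R - P" "u \<otimes> (x \<otimes> s \<ominus> a \<otimes> \<one>) = \<zero>" and c1: "a \<in> carrier R" "s \<in> carrier R - P"
    using h1 unfolding rel_iff by blast
  obtain v where v: "v \<in> carrier R - P" "v \<otimes> (y \<otimes> t \<ominus> b \<otimes> \<one>) = \<zero>" and c2: "b \<in> carrier R" "t \<in> carrier R - P"
    using h2 unfolding rel_iff by blast
  have cc: "u \<in> carrier R" "v \<in> carrier R" "s \<in> carrier R" "t \<in> carrier R" using u v c1 c2 by auto
  have "(u \<otimes> v) \<otimes> ((x \<otimes> y) \<otimes> (s \<otimes> t) \<ominus> (a \<otimes> b) \<otimes> \<one>)
      = v \<otimes> y \<otimes> t \<otimes> (u \<otimes> (x \<otimes> s \<ominus> a \<otimes> \<one>)) \<oplus> u \<otimes> a \<otimes> (v \<otimes> (y \<otimes> t \<ominus> b \<otimes> \<one>))"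
    using cc c1 c2 x y by algebra
  also have "\<dots> = \<zero>" using u v cc c1 x y by simp
  finally show ?thesis unfolding rel_iff using u v c1 c2 x y notP_mult one_notP by auto
qed

lemma lpi_add: "x \<in> carrier R \<Longrightarrow> y \<in> carrier R \<Longrightarrow> lpi (x \<oplus> y) = lpi x \<oplus>\<^bsub>localization R P\<^esub> lpi y"
proof -
  assume x: "x \<in> carrier R" and y: "y \<in> carrier R"
  have "loc_add R P (lpi x) (lpi y) = lpi (x \<oplus> y)"
    unfolding loc_add_def
  proof
    show "(\<Union>((\<lambda>((a, s), (b, t)). loc_rel R P `` {((a \<otimes> t) \<oplus> (b \<otimes> s), s \<otimes> t)}) ` (lpi x \<times> lpi y))) \<subseteq> lpi (x \<oplus> y)"
      using add_rel[OF x y] class_eq_lpi by (force simp: lpi_mem)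
    show "lpi (x \<oplus> y) \<subseteq> (\<Union>((\<lambda>((a, s), (b, t)). loc_rel R P `` {((a \<otimes> t) \<oplus> (b \<otimes> s), s \<otimes> t)}) ` (lpi x \<times> lpi y)))"
    proof -
      have "loc_rel R P `` {((x \<otimes> \<one>) \<oplus> (y \<otimes> \<one>), \<one> \<otimes> \<one>)} = lpi (x \<oplus> y)"
        using x y by (simp add: lpi_def)
      then show ?thesis using lpi_self[OF x] lpi_self[OF y] by force
    qed
  qed
  then show ?thesis by (simp add: localization_def)
qed

lemma lpi_mult: "x \<in> carrier R \<Longrightarrow> y \<in> carrier R \<Longrightarrow> lpi (x \<otimes> y) = lpi x \<otimes>\<^bsub>localization R P\<^esub> lpi y"
proof -
  assume x: "x \<in> carrier R" and y: "y \<in> carrier R"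
  have "loc_mult R P (lpi x) (lpi y) = lpi (x \<otimes> y)"
    unfolding loc_mult_def
  proof
    show "(\<Union>((\<lambda>((a, s), (b, t)). loc_rel R P `` {(a \<otimes> b, s \<otimes> t)}) ` (lpi x \<times> lpi y))) \<subseteq> lpi (x \<otimes> y)"
      using mult_rel[OF x y] class_eq_lpi by (force simp: lpi_mem)
    show "lpi (x \<otimes> y) \<subseteq> (\<Union>((\<lambda>((a, s), (b, t)). loc_rel R P `` {(a \<otimes> b, s \<otimes> t)}) ` (lpi x \<times> lpi y)))"
    proof -
      have "loc_rel R P `` {(x \<otimes> y, \<one> \<otimes> \<one>)} = lpi (x \<otimes> y)"
        using x y by (simp add: lpi_def)
      then show ?thesis using lpi_self[OF x] lpi_self[OF y] by force
    qed
  qed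
  then show ?thesis by (simp add: localization_def)
qed

lemma lpi_one: "lpi \<one> = \<one>\<^bsub>localization R P\<^esub>"
  by (simp add: localization_def lpi_def)
lemma lpi_zero: "lpi \<zero> = \<zero>\<^bsub>localization R P\<^esub>"
  by (simp add: localization_def lpi_def)

lemma S_cring: "cring (localization R P)" and lpi_hom: "lpi \<in> ring_hom R (localization R P)"
  using hom_image_cring[OF is_cring carrier_S lpi_add lpi_mult lpi_one lpi_zero] by auto

end



context artloc begin

lemma ann_ideal:
  assumes u: "u \<in> carrier R"
  shows "ideal {x \<in> carrier R. u \<otimes> x = \<zero>} R"
proof (intro subgroup.intro idealI[OF ring_axioms])
  show "{x \<in> carrier R. u \<otimes> x = \<zero>} \<subseteq> carrier (add_monoid R)" by auto
  show "\<And>x y. x \<in> {x \<in> carrier R. u \<otimes> x = \<zero>} \<Longrightarrow> y \<in> {x \<in> carrier R. u \<otimes> x = \<zero>} \<Longrightarrow>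
      x \<otimes>\<^bsub>add_monoid R\<^esub> y \<in> {x \<in> carrier R. u \<otimes> x = \<zero>}"
    using u by (simp add: r_distr)
  show "\<one>\<^bsub>add_monoid R\<^esub> \<in> {x \<in> carrier R. u \<otimes> x = \<zero>}" using u by simp
  show "\<And>x. x \<in> {x \<in> carrier R. u \<otimes> x = \<zero>} \<Longrightarrow> inv\<^bsub>add_monoid R\<^esub> x \<in> {x \<in> carrier R. u \<otimes> x = \<zero>}"
    using u by (simp add: a_inv_def[symmetric] r_minus)
  show "\<And>a x. a \<in> {x \<in> carrier R. u \<otimes> x = \<zero>} \<Longrightarrow> x \<in> carrier R \<Longrightarrow> x \<otimes> a \<in> {x \<in> carrier R. u \<otimes> x = \<zero>}"
    using u by (simp add: m_lcomm)
  show "\<And>a x. a \<in> {x \<in> carrier R. u \<otimes> x = \<zero>} \<Longrightarrow> x \<in> carrier R \<Longrightarrow> a \<otimes> x \<in> {x \<in> carrier R. u \<otimes> x = \<zero>}"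
    using u by (simp add: m_assoc[symmetric])
qed

lemma lpi_zero_ann:
  assumes "a \<in> carrier R" "lpi a = lpi \<zero>"
  shows "\<exists>v \<in> carrier R - P. v \<otimes> a = \<zero>"
  using assms lpi_eq_iff[of a \<zero>] by (auto simp: minus_eq)

lemma ann_finite:
  assumes "finite A" "A \<subseteq> {x \<in> carrier R. lpi x = lpi \<zero>}"
  shows "\<exists>u \<in> carrier R - P. \<forall>a \<in> A. u \<otimes> a = \<zero>"
  using assms
proof (induction A rule: finite_induct)
  case empty then show ?case using one_notP by blast
next
  case (insert b F)
  then obtain u where u: "u \<in> carrier R - P" "\<forall>a \<in> F. u \<otimes> a = \<zero>" by auto
  have bb: "b \<in> carrier R" "lpi b = lpi \<zero>" using insert.prems by auto
  obtain v where v: "v \<in> carrier R - P" "v \<otimes> b = \<zero>" using lpi_zero_ann[OF bb] by blast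
  have "\<forall>a \<in> insert b F. (u \<otimes> v) \<otimes> a = \<zero>"
  proof
    fix a assume "a \<in> insert b F"
    have uc: "u \<in> carrier R" and vc: "v \<in> carrier R" using u(1) v(1) by auto
    show "(u \<otimes> v) \<otimes> a = \<zero>"
    proof (cases "a = b")
      case True
      have "(u \<otimes> v) \<otimes> a = u \<otimes> (v \<otimes> b)" using True uc vc bb(1) by (simp add: m_assoc)
      then show ?thesis using v(2) uc by simp
    next
      case False
      then have aF: "a \<in> F" using \<open>a \<in> insert b F\<close> by simp
      then have ac: "a \<in> carrier R" using insert.prems by auto
      have "(u \<otimes> v) \<otimes> a = v \<otimes> (u \<otimes> a)" using uc vc ac by (simp add: m_assoc m_lcomm)
      then show ?thesis using u(2) aF vc by simp
    qed
  qed
  then show ?case by (rule bexI[OF _ notP_mult[OF u(1) v(1)]])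
qed

lemma ann_exists: "\<exists>u \<in> carrier R - P. \<forall>x \<in> carrier R. lpi x = lpi \<zero> \<longrightarrow> u \<otimes> x = \<zero>"
proof -
  have hr: "ring_hom_ring R (localization R P) lpi"
    by (rule ring_hom_ringI2[OF ring_axioms cring.axioms(1)[OF S_cring] lpi_hom])
  let ?K = "{x \<in> carrier R. lpi x = lpi \<zero>}"
  have "?K = a_kernel R (localization R P) lpi" unfolding a_kernel_def' lpi_zero ..
  then have idK: "ideal ?K R" using ring_hom_ring.kernel_is_ideal[OF hr] by simp
  obtain A where A: "A \<subseteq> carrier R" "finite A" "?K = Idl A"
    using noetherian_ring.finetely_gen[OF noeth idK] by blast
  have AK: "A \<subseteq> ?K" using A(3) genideal_self[OF A(1)] by blast
  obtain u where u: "u \<in> carrier R - P" "\<forall>a \<in> A. u \<otimes> a = \<zero>" using ann_finite[OF A(2) AK] by blast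
  have "Idl A \<subseteq> {x \<in> carrier R. u \<otimes> x = \<zero>}"
    by (rule genideal_minimal[OF ann_ideal]) (use u A(1) in auto)
  then show ?thesis using u A(3) by blast
qed

lemma pow_shift:
  assumes s: "s \<in> carrier R" and t: "t \<in> carrier R" and h: "s [^] n = s [^] Suc n \<otimes> t"
  shows "s [^] (n + j) \<otimes> t [^] j = s [^] (n::nat)"
proof (induction j)
  case 0 then show ?case using s by simp
next
  case (Suc j)
  have c: "s [^] (n + j) \<in> carrier R" "t [^] j \<in> carrier R" "s [^] n \<in> carrier R" using s t by auto
  have "s [^] (n + Suc j) \<otimes> t [^] Suc j = (s [^] (n + j) \<otimes> t [^] j) \<otimes> (s \<otimes> t)"
    using s t c by (simp only: add_Suc_right nat_pow_Suc) algebra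
  also have "\<dots> = s [^] n \<otimes> s \<otimes> t" using Suc c s t by (simp add: m_assoc)
  also have "\<dots> = s [^] n" using h s by (simp add: nat_pow_Suc)
  finally show ?case .
qed

lemma aux4: "a \<in> carrier R \<Longrightarrow> b \<in> carrier R \<Longrightarrow> (a \<otimes> b) \<otimes> (a \<otimes> b) = ((a \<otimes> a) \<otimes> b) \<otimes> b"
  by (simp add: m_assoc m_lcomm)
lemma aux5: "a \<in> carrier R \<Longrightarrow> b \<in> carrier R \<Longrightarrow> (a \<otimes> b) \<otimes> a = (a \<otimes> a) \<otimes> b"
  by algebra
lemma aux6: "a \<in> carrier R \<Longrightarrow> b \<in> carrier R \<Longrightarrow> x \<in> carrier R \<Longrightarrow> (a \<otimes> b) \<otimes> x = b \<otimes> (a \<otimes> x)"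
  by (simp add: m_assoc m_lcomm)
lemma aux7: "a \<in> carrier R \<Longrightarrow> s \<in> carrier R \<Longrightarrow> t \<in> carrier R \<Longrightarrow> x \<in> carrier R \<Longrightarrow> (a \<otimes> s \<otimes> t) \<otimes> x = a \<otimes> t \<otimes> (s \<otimes> x)"
  by (simp add: m_assoc m_lcomm)

lemma idem_exists: "\<exists>e \<in> carrier R. e \<otimes> e = e \<and> lpi e = lpi \<one> \<and> (\<forall>x \<in> carrier R. lpi x = lpi \<zero> \<longrightarrow> e \<otimes> x = \<zero>)"
proof -
  obtain s where s: "s \<in> carrier R - P" "\<forall>x \<in> carrier R. lpi x = lpi \<zero> \<longrightarrow> s \<otimes> x = \<zero>"
    using ann_exists by blast
  have sc: "s \<in> carrier R" using s by simp
  obtain n t where t: "t \<in> carrier R" "s [^] n = s [^] Suc n \<otimes> t" using artinian_stab sc by blast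
  define e where "e = s [^] n \<otimes> t [^] n"
  have pc: "s [^] n \<in> carrier R" "t [^] n \<in> carrier R" using sc t(1) by auto
  have ec: "e \<in> carrier R" unfolding e_def using pc by simp
  have sh: "s [^] (n + n) \<otimes> t [^] n = s [^] n" using pow_shift[OF sc t(1) t(2)] .
  have pp: "s [^] n \<otimes> s [^] n = s [^] (n + n)" using sc by (rule nat_pow_mult)
  have ee: "e \<otimes> e = e"
  proof -
    have "e \<otimes> e = ((s [^] n \<otimes> s [^] n) \<otimes> t [^] n) \<otimes> t [^] n" unfolding e_def using aux4 pc by simp
    also have "\<dots> = (s [^] (n + n) \<otimes> t [^] n) \<otimes> t [^] n" by (simp only: pp)
    also have "\<dots> = e" unfolding sh e_def ..
    finally show ?thesis .
  qed
  have esn: "e \<otimes> s [^] n = s [^] n"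
  proof -
    have "e \<otimes> s [^] n = (s [^] n \<otimes> s [^] n) \<otimes> t [^] n" unfolding e_def using aux5 pc by simp
    also have "\<dots> = s [^] n" by (simp only: pp sh)
    finally show ?thesis .
  qed
  have eP: "e \<notin> P"
  proof
    assume "e \<in> P"
    then have "e \<otimes> s [^] n \<in> P" using I_r_closed pc(1) by blast
    then show False using esn pow_notP[OF s(1), of n] by simp
  qed
  have "e \<otimes> (e \<ominus> \<one>) = \<zero>" using ee ec by (simp add: minus_eq r_distr r_minus r_neg)
  then have le: "lpi e = lpi \<one>" using lpi_eq_iff[of e \<one>] ec eP by auto
  have ker: "\<forall>x \<in> carrier R. lpi x = lpi \<zero> \<longrightarrow> e \<otimes> x = \<zero>"
  proof (intro ballI impI)
    fix x assume x: "x \<in> carrier R" "lpi x = lpi \<zero>"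
    then have sx: "s \<otimes> x = \<zero>" using s by auto
    have eq1: "s [^] n = s [^] n \<otimes> s \<otimes> t" using t(2) by (simp only: nat_pow_Suc)
    have "s [^] n \<otimes> x = (s [^] n \<otimes> s \<otimes> t) \<otimes> x"
      by (rule arg_cong[where f="\<lambda>z. z \<otimes> x"]) (rule eq1)
    also have "\<dots> = s [^] n \<otimes> t \<otimes> (s \<otimes> x)" using aux7[of "s [^] n" s t x] sc t(1) pc x by simp
    finally have "s [^] n \<otimes> x = s [^] n \<otimes> t \<otimes> (s \<otimes> x)" .
    then have "s [^] n \<otimes> x = \<zero>" using sx pc t(1) x by simp
    moreover have "e \<otimes> x = t [^] n \<otimes> (s [^] n \<otimes> x)" unfolding e_def using aux6[of "s [^] n" "t [^] n" x] pc x(1) by simp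
    ultimately show "e \<otimes> x = \<zero>" using pc by simp
  qed
  show ?thesis using ec ee le ker by blast
qed

end



locale splitting = ring_hom_cring R S h for R (structure) and S and h +
  fixes e
  assumes e_carr: "e \<in> carrier R" and e_idem: "e \<otimes> e = e" and h_e: "h e = \<one>\<^bsub>S\<^esub>"
    and ker: "\<And>x. x \<in> carrier R \<Longrightarrow> h x = \<zero>\<^bsub>S\<^esub> \<Longrightarrow> e \<otimes> x = \<zero>"
    and surj: "carrier S \<subseteq> h ` carrier R"
begin

definition sg where
  "sg a = e \<otimes> (SOME x. x \<in> carrier R \<and> h x = a)"

definition f where "f = \<one> \<ominus> e"

lemma some_pre: "a \<in> carrier S \<Longrightarrow> (SOME x. x \<in> carrier R \<and> h x = a) \<in> carrier R \<and> h (SOME x. x \<in> carrier R \<and> h x = a) = a"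
  by (rule someI_ex) (use surj in blast)

lemma sg_carr: "a \<in> carrier S \<Longrightarrow> sg a \<in> carrier R"
  unfolding sg_def using some_pre e_carr by simp

lemma h_sg: "a \<in> carrier S \<Longrightarrow> h (sg a) = a"
  unfolding sg_def using some_pre e_carr h_e by simp

lemma e_sg: "a \<in> carrier S \<Longrightarrow> e \<otimes> sg a = sg a"
  unfolding sg_def using some_pre e_carr e_idem by (simp add: R.m_assoc[symmetric])

lemma f_carr: "f \<in> carrier R" unfolding f_def using e_carr by simp

lemma h_f: "h f = \<zero>\<^bsub>S\<^esub>"
  unfolding f_def using e_carr h_e by (simp add: R.minus_eq S.minus_eq S.r_neg)

lemma f_e: "f \<otimes> e = \<zero>"
  unfolding f_def using e_carr e_idem by (simp add: R.minus_eq R.l_distr R.l_minus R.r_neg)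

lemma e_f: "e \<otimes> f = \<zero>" using f_e e_carr f_carr by (simp add: R.m_comm)

lemma f_idem: "f \<otimes> f = f"
  unfolding f_def using e_carr e_idem by (simp add: R.minus_eq R.l_distr R.r_distr R.l_minus R.r_minus R.r_neg R.a_assoc)

lemma f_sg: "a \<in> carrier S \<Longrightarrow> f \<otimes> sg a = \<zero>"
proof -
  assume a: "a \<in> carrier S"
  have "f \<otimes> sg a = (f \<otimes> e) \<otimes> sg a" using e_sg[OF a] f_carr e_carr sg_carr[OF a] by (simp add: R.m_assoc)
  then show ?thesis using f_e sg_carr[OF a] by simp
qed

lemma ef_sum: "x \<in> carrier R \<Longrightarrow> e \<otimes> x \<oplus> f \<otimes> x = x"
  unfolding f_def using e_carr by algebra

lemma sg_zero: "sg \<zero>\<^bsub>S\<^esub> = \<zero>"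
proof -
  have c: "sg \<zero>\<^bsub>S\<^esub> \<in> carrier R" using sg_carr by simp
  have "e \<otimes> sg \<zero>\<^bsub>S\<^esub> = \<zero>" using ker[OF c] h_sg by simp
  then show ?thesis using e_sg by simp
qed

lemma split_eq:
  assumes x: "x \<in> carrier R" and y: "y \<in> carrier R" and hh: "h x = h y" and ff: "f \<otimes> x = f \<otimes> y"
  shows "x = y"
proof -
  have d: "x \<ominus> y \<in> carrier R" using x y by simp
  have "h (x \<ominus> y) = \<zero>\<^bsub>S\<^esub>" using x y hh by (simp add: R.minus_eq S.minus_eq S.r_neg)
  then have e0: "e \<otimes> (x \<ominus> y) = \<zero>" using ker d by simp
  have f0: "f \<otimes> (x \<ominus> y) = \<zero>" using ff x y f_carr by (simp add: R.minus_eq R.r_distr R.r_minus R.r_neg)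
  have "x \<ominus> y = \<zero>" using ef_sum[OF d] e0 f0 by simp
  then show ?thesis using x y R.minus_equality R.r_neg
    by (metis R.add.inv_closed R.add.inv_equality R.minus_eq R.minus_minus)
qed

lemma h_sub: "x \<in> carrier R \<Longrightarrow> y \<in> carrier R \<Longrightarrow> h (x \<ominus> y) = h x \<ominus>\<^bsub>S\<^esub> h y"
  by (simp add: R.minus_eq S.minus_eq)

end



context cring begin

lemma fvec_carr: "v \<in> fvec R n \<Longrightarrow> v i \<in> carrier R"
  unfolding fvec_def by (cases "i < n") auto

lemma coch_carr: "(\<And>j. j < n \<Longrightarrow> u j \<in> fvec R p) \<Longrightarrow> j < n \<Longrightarrow> u j i \<in> carrier R"
  using fvec_carr by blast

lemma carr_aux: "(\<And>j. j < n \<Longrightarrow> u j \<in> fvec R p) \<Longrightarrow> (\<And>j. j < n \<Longrightarrow> D j l \<in> carrier R) \<Longrightarrow> j < n \<Longrightarrow> D j l \<otimes> u j i \<in> carrier R"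
  by (intro m_closed) (auto intro: fvec_carr)

lemma cobdry_fvec:
  assumes u: "\<And>j. j < n \<Longrightarrow> u j \<in> fvec R p" and D: "\<And>j. j < n \<Longrightarrow> D j l \<in> carrier R"
  shows "cobdry R n D u l \<in> fvec R p"
  unfolding fvec_def cobdry_def
proof (intro CollectI conjI allI impI)
  fix i assume "i < p"
  show "(\<Oplus>j\<in>{..<n}. D j l \<otimes> u j i) \<in> carrier R"
    by (rule finsum_closed) (use carr_aux[of n u p D l] u D in auto)
next
  fix i assume "p \<le> i"
  then have "\<And>j. j < n \<Longrightarrow> D j l \<otimes> u j i = \<zero>" using u D unfolding fvec_def by auto
  then show "(\<Oplus>j\<in>{..<n}. D j l \<otimes> u j i) = \<zero>" by (intro add.finprod_one_eqI) auto
qed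

lemma cobdry_cong:
  assumes eq: "\<And>j. j < n \<Longrightarrow> u j = u' j" and u': "\<And>j. j < n \<Longrightarrow> u' j \<in> fvec R p"
    and D: "\<And>j. j < n \<Longrightarrow> D j l \<in> carrier R"
  shows "cobdry R n D u l = cobdry R n D u' l"
  unfolding cobdry_def
proof
  fix i show "(\<Oplus>j\<in>{..<n}. D j l \<otimes> u j i) = (\<Oplus>j\<in>{..<n}. D j l \<otimes> u' j i)"
    by (rule finsum_cong') (use carr_aux[of n u' p D l] eq u' D in auto)
qed

lemma vsub_fvec: "a \<in> fvec R p \<Longrightarrow> b \<in> fvec R p \<Longrightarrow> vsub R a b \<in> fvec R p"
  unfolding fvec_def vsub_def by (auto simp: minus_eq)

lemma zero_fvec: "(\<lambda>_. \<zero>) \<in> fvec R n" unfolding fvec_def by auto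

end

context splitting begin

definition vm where "vm v = (\<lambda>i. h (v i))"
definition lv where "lv a = (\<lambda>i. sg (a i))"

lemma fvec_vm: "v \<in> fvec R n \<Longrightarrow> vm v \<in> fvec S n"
  unfolding fvec_def vm_def by auto

lemma fvec_lv: "a \<in> fvec S n \<Longrightarrow> lv a \<in> fvec R n"
  unfolding fvec_def lv_def using sg_carr sg_zero by auto

lemma vm_lv: "a \<in> fvec S n \<Longrightarrow> vm (lv a) = a"
  unfolding vm_def lv_def using h_sg S.fvec_carr by auto

lemma vm_cobdry:
  assumes u: "\<And>j. j < n \<Longrightarrow> u j \<in> fvec R p" and D: "\<And>j. j < n \<Longrightarrow> D j l \<in> carrier R"
  shows "vm (cobdry R n D u l) = cobdry S n (\<lambda>i j. h (D i j)) (\<lambda>j. vm (u j)) l"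
  unfolding vm_def cobdry_def
proof
  fix i
  have P: "(\<lambda>j. D j l \<otimes> u j i) \<in> {..<n} \<rightarrow> carrier R" using R.carr_aux[of n u p D l] u D by auto
  have "h (\<Oplus>j\<in>{..<n}. D j l \<otimes> u j i) = (\<Oplus>\<^bsub>S\<^esub>j\<in>{..<n}. h (D j l \<otimes> u j i))"
    using hom_finsum[OF P] by (simp add: comp_def)
  also have "\<dots> = (\<Oplus>\<^bsub>S\<^esub>j\<in>{..<n}. h (D j l) \<otimes>\<^bsub>S\<^esub> h (u j i))"
  proof (rule S.finsum_cong')
    show "(\<lambda>j. h (D j l) \<otimes>\<^bsub>S\<^esub> h (u j i)) \<in> {..<n} \<rightarrow> carrier S"
      using R.coch_carr[of n u p _ i, OF u] D by auto
    fix j assume "j \<in> {..<n}"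
    then show "h (D j l \<otimes> u j i) = h (D j l) \<otimes>\<^bsub>S\<^esub> h (u j i)" using R.coch_carr[of n u p _ i, OF u] D by auto
  qed simp
  finally show "h (\<Oplus>j\<in>{..<n}. D j l \<otimes> u j i) = (\<Oplus>\<^bsub>S\<^esub>j\<in>{..<n}. h (D j l) \<otimes>\<^bsub>S\<^esub> h (u j i))" .
qed

lemma vm_vsub: "a \<in> fvec R p \<Longrightarrow> b \<in> fvec R p \<Longrightarrow> vm (vsub R a b) = vsub S (vm a) (vm b)"
  unfolding vm_def vsub_def using R.fvec_carr h_sub by auto

lemma ext_transfer:
  assumes mats: "\<And>k. is_mat R (r k) (r (Suc k)) (D k)"
    and img: "\<And>v. v \<in> fvec R p \<Longrightarrow> (v \<in> mimg R p q' \<psi>' \<longleftrightarrow> vm v \<in> mimg S p q \<psi>)"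
  shows "ext_nonzero R r D p q' \<psi>' k \<longleftrightarrow> ext_nonzero S r (\<lambda>k i j. h (D k i j)) p q \<psi> k"
proof
  assume "ext_nonzero R r D p q' \<psi>' k"
  then obtain u where u: "u \<in> cochain R p (r k)"
    and coc: "\<forall>l < r (Suc k). cobdry R (r k) (D k) u l \<in> mimg R p q' \<psi>'"
    and nb: "\<not> (case k of 0 \<Rightarrow> (\<forall>j < r 0. u j \<in> mimg R p q' \<psi>')
            | Suc k' \<Rightarrow> (\<exists>w \<in> cochain R p (r k').
                 \<forall>j < r k. vsub R (u j) (cobdry R (r k') (D k') w j) \<in> mimg R p q' \<psi>'))"
    unfolding ext_nonzero_def by blast
  have uf: "\<And>j. j < r k \<Longrightarrow> u j \<in> fvec R p" using u unfolding cochain_def by auto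
  define U where "U = (\<lambda>j. vm (u j))"
  have Uc: "U \<in> cochain S p (r k)" unfolding U_def cochain_def using uf fvec_vm by auto
  have coc': "\<forall>l < r (Suc k). cobdry S (r k) (\<lambda>i j. h (D k i j)) U l \<in> mimg S p q \<psi>"
  proof (intro allI impI)
    fix l assume l: "l < r (Suc k)"
    have Dl: "\<And>j. j < r k \<Longrightarrow> D k j l \<in> carrier R" using mats[of k] l unfolding is_mat_def by auto
    have "cobdry R (r k) (D k) u l \<in> fvec R p" using R.cobdry_fvec[of "r k" u p "D k" l, OF uf Dl] .
    then show "cobdry S (r k) (\<lambda>i j. h (D k i j)) U l \<in> mimg S p q \<psi>"
      using img coc l vm_cobdry[of "r k" u p "D k" l, OF uf Dl] unfolding U_def by auto
  qed
  have nb': "\<not> (case k of 0 \<Rightarrow> (\<forall>j < r 0. U j \<in> mimg S p q \<psi>)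
            | Suc k' \<Rightarrow> (\<exists>w \<in> cochain S p (r k').
                 \<forall>j < r k. vsub S (U j) (cobdry S (r k') (\<lambda>i j. h (D k' i j)) w j) \<in> mimg S p q \<psi>))"
  proof (cases k)
    case 0
    then show ?thesis using nb img uf unfolding U_def by auto
  next
    case (Suc k')
    show ?thesis
    proof
      assume "case k of 0 \<Rightarrow> (\<forall>j < r 0. U j \<in> mimg S p q \<psi>)
            | Suc k' \<Rightarrow> (\<exists>w \<in> cochain S p (r k').
                 \<forall>j < r k. vsub S (U j) (cobdry S (r k') (\<lambda>i j. h (D k' i j)) w j) \<in> mimg S p q \<psi>)"
      then obtain w where w: "w \<in> cochain S p (r k')"
        and wc: "\<forall>j < r k. vsub S (U j) (cobdry S (r k') (\<lambda>i j. h (D k' i j)) w j) \<in> mimg S p q \<psi>"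
        using Suc by auto
      have wf: "\<And>j. j < r k' \<Longrightarrow> w j \<in> fvec S p" using w unfolding cochain_def by auto
      define W where "W = (\<lambda>j. lv (w j))"
      have Wf: "\<And>j. j < r k' \<Longrightarrow> W j \<in> fvec R p" unfolding W_def using wf fvec_lv by auto
      have "\<forall>j < r k. vsub R (u j) (cobdry R (r k') (D k') W j) \<in> mimg R p q' \<psi>'"
      proof (intro allI impI)
        fix j assume j: "j < r k"
        have Dj: "\<And>i. i < r k' \<Longrightarrow> D k' i j \<in> carrier R" using mats[of k'] j Suc unfolding is_mat_def by auto
        have cf: "cobdry R (r k') (D k') W j \<in> fvec R p" using R.cobdry_fvec[of "r k'" W p "D k'" j, OF Wf Dj] .
        have vf: "vsub R (u j) (cobdry R (r k') (D k') W j) \<in> fvec R p" using R.vsub_fvec[OF uf[OF j] cf] .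
        have hDj: "\<And>i. i < r k' \<Longrightarrow> h (D k' i j) \<in> carrier S" using Dj by simp
        have "vm (vsub R (u j) (cobdry R (r k') (D k') W j)) = vsub S (U j) (cobdry S (r k') (\<lambda>i j. h (D k' i j)) (\<lambda>i. vm (W i)) j)"
          using vm_vsub[OF uf[OF j] cf] vm_cobdry[of "r k'" W p "D k'" j, OF Wf Dj] unfolding U_def by simp
        also have "cobdry S (r k') (\<lambda>i j. h (D k' i j)) (\<lambda>i. vm (W i)) j = cobdry S (r k') (\<lambda>i j. h (D k' i j)) w j"
          by (rule S.cobdry_cong[of "r k'" _ w p "\<lambda>i j. h (D k' i j)" j, OF _ wf hDj]) (auto simp: W_def intro!: vm_lv wf)
        finally show "vsub R (u j) (cobdry R (r k') (D k') W j) \<in> mimg R p q' \<psi>'"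
          using img[OF vf] wc j by simp
      qed
      moreover have "W \<in> cochain R p (r k')" unfolding cochain_def using Wf by auto
      ultimately show False using nb Suc by auto
    qed
  qed
  show "ext_nonzero S r (\<lambda>k i j. h (D k i j)) p q \<psi> k"
    unfolding ext_nonzero_def using Uc coc' nb' by blast
next
  assume "ext_nonzero S r (\<lambda>k i j. h (D k i j)) p q \<psi> k"
  then obtain a where a: "a \<in> cochain S p (r k)"
    and coc: "\<forall>l < r (Suc k). cobdry S (r k) (\<lambda>i j. h (D k i j)) a l \<in> mimg S p q \<psi>"
    and nb: "\<not> (case k of 0 \<Rightarrow> (\<forall>j < r 0. a j \<in> mimg S p q \<psi>)
            | Suc k' \<Rightarrow> (\<exists>w \<in> cochain S p (r k').
                 \<forall>j < r k. vsub S (a j) (cobdry S (r k') (\<lambda>i j. h (D k' i j)) w j) \<in> mimg S p q \<psi>))"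
    unfolding ext_nonzero_def by blast
  have af: "\<And>j. j < r k \<Longrightarrow> a j \<in> fvec S p" using a unfolding cochain_def by auto
  define u where "u = (\<lambda>j. lv (a j))"
  have uf: "\<And>j. j < r k \<Longrightarrow> u j \<in> fvec R p" unfolding u_def using af fvec_lv by auto
  have vu: "\<And>j. j < r k \<Longrightarrow> vm (u j) = a j" unfolding u_def using af vm_lv by auto
  have uc: "u \<in> cochain R p (r k)" unfolding cochain_def using uf by auto
  have coc': "\<forall>l < r (Suc k). cobdry R (r k) (D k) u l \<in> mimg R p q' \<psi>'"
  proof (intro allI impI)
    fix l assume l: "l < r (Suc k)"
    have Dl: "\<And>j. j < r k \<Longrightarrow> D k j l \<in> carrier R" using mats[of k] l unfolding is_mat_def by auto
    have hDl: "\<And>j. j < r k \<Longrightarrow> h (D k j l) \<in> carrier S" using Dl by simp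
    have cf: "cobdry R (r k) (D k) u l \<in> fvec R p" using R.cobdry_fvec[of "r k" u p "D k" l, OF uf Dl] .
    have "vm (cobdry R (r k) (D k) u l) = cobdry S (r k) (\<lambda>i j. h (D k i j)) (\<lambda>j. vm (u j)) l"
      using vm_cobdry[of "r k" u p "D k" l, OF uf Dl] .
    also have "\<dots> = cobdry S (r k) (\<lambda>i j. h (D k i j)) a l"
      by (rule S.cobdry_cong[of "r k" _ a p "\<lambda>i j. h (D k i j)" l, OF _ af hDl]) (simp add: vu)
    finally show "cobdry R (r k) (D k) u l \<in> mimg R p q' \<psi>'" using img[OF cf] coc l by simp
  qed
  have nb': "\<not> (case k of 0 \<Rightarrow> (\<forall>j < r 0. u j \<in> mimg R p q' \<psi>')
            | Suc k' \<Rightarrow> (\<exists>w \<in> cochain R p (r k').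
                 \<forall>j < r k. vsub R (u j) (cobdry R (r k') (D k') w j) \<in> mimg R p q' \<psi>'))"
  proof (cases k)
    case 0
    then show ?thesis using nb img uf vu by auto
  next
    case (Suc k')
    show ?thesis
    proof
      assume "case k of 0 \<Rightarrow> (\<forall>j < r 0. u j \<in> mimg R p q' \<psi>')
            | Suc k' \<Rightarrow> (\<exists>w \<in> cochain R p (r k').
                 \<forall>j < r k. vsub R (u j) (cobdry R (r k') (D k') w j) \<in> mimg R p q' \<psi>')"
      then obtain W where W: "W \<in> cochain R p (r k')"
        and wc: "\<forall>j < r k. vsub R (u j) (cobdry R (r k') (D k') W j) \<in> mimg R p q' \<psi>'"
        using Suc by auto
      have Wf: "\<And>j. j < r k' \<Longrightarrow> W j \<in> fvec R p" using W unfolding cochain_def by auto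
      define w where "w = (\<lambda>j. vm (W j))"
      have "\<forall>j < r k. vsub S (a j) (cobdry S (r k') (\<lambda>i j. h (D k' i j)) w j) \<in> mimg S p q \<psi>"
      proof (intro allI impI)
        fix j assume j: "j < r k"
        have Dj: "\<And>i. i < r k' \<Longrightarrow> D k' i j \<in> carrier R" using mats[of k'] j Suc unfolding is_mat_def by auto
        have cf: "cobdry R (r k') (D k') W j \<in> fvec R p" using R.cobdry_fvec[of "r k'" W p "D k'" j, OF Wf Dj] .
        have vf: "vsub R (u j) (cobdry R (r k') (D k') W j) \<in> fvec R p" using R.vsub_fvec[OF uf[OF j] cf] .
        have "vm (vsub R (u j) (cobdry R (r k') (D k') W j)) = vsub S (a j) (cobdry S (r k') (\<lambda>i j. h (D k' i j)) w j)"
          using vm_vsub[OF uf[OF j] cf] vm_cobdry[of "r k'" W p "D k'" j, OF Wf Dj] vu[OF j] unfolding w_def by simp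
        then show "vsub S (a j) (cobdry S (r k') (\<lambda>i j. h (D k' i j)) w j) \<in> mimg S p q \<psi>"
          using img[OF vf] wc j by simp
      qed
      moreover have "w \<in> cochain S p (r k')" unfolding cochain_def w_def using Wf fvec_vm by auto
      ultimately show False using nb Suc by auto
    qed
  qed
  show "ext_nonzero R r D p q' \<psi>' k"
    unfolding ext_nonzero_def using uc coc' nb' by blast
qed

end



fun cc :: "(nat \<Rightarrow> nat) \<Rightarrow> nat \<Rightarrow> nat" where
  "cc r 0 = 0" | "cc r (Suc 0) = r 0" | "cc r (Suc (Suc k)) = r (Suc k) + cc r k"

definition cmr :: "(nat \<Rightarrow> nat) \<Rightarrow> nat \<Rightarrow> nat" where
  "cmr r k = (case k of 0 \<Rightarrow> 0 | Suc j \<Rightarrow> cc r j)"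

definition rp :: "(nat \<Rightarrow> nat) \<Rightarrow> nat \<Rightarrow> nat" where
  "rp r k = r k + cmr r k + cc r k"

lemma cmr_0[simp]: "cmr r 0 = 0" and cmr_Suc[simp]: "cmr r (Suc k) = cc r k"
  unfolding cmr_def by auto

lemma cc_Suc: "cc r (Suc k) = r k + cmr r k"
  by (cases k) auto

lemma rp_0: "rp r 0 = r 0" unfolding rp_def by simp

definition dp :: "('a, 'm) ring_scheme \<Rightarrow> (nat \<Rightarrow> nat) \<Rightarrow> (nat \<Rightarrow> nat \<Rightarrow> nat \<Rightarrow> 'a) \<Rightarrow> nat \<Rightarrow> nat \<Rightarrow> nat \<Rightarrow> 'a" where
  "dp S r d k i j =
     (if i < r k \<and> j < r (Suc k) then d k i j else \<zero>\<^bsub>S\<^esub>) \<oplus>\<^bsub>S\<^esub>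
     (if r k + cmr r k \<le> i \<and> j = r (Suc k) + (i - r k - cmr r k) then \<one>\<^bsub>S\<^esub> else \<zero>\<^bsub>S\<^esub>)"

lemma cond_swap: "((a::nat) \<le> j \<and> l = b + (j - a)) \<longleftrightarrow> (b \<le> l \<and> j = a + (l - b))"
  by auto

context cring begin

lemma fs_prefix:
  fixes m n :: nat
  assumes "m \<le> n" "\<And>j. j < m \<Longrightarrow> g j \<in> carrier R"
  shows "(\<Oplus>j\<in>{..<n}. if j < m then g j else \<zero>) = (\<Oplus>j\<in>{..<m}. g j)"
proof -
  have "(\<Oplus>j\<in>{..<m}. g j) = (\<Oplus>j\<in>{..<n}. if j < m then g j else \<zero>)"
    by (rule add.finprod_mono_neutral_cong_left) (use assms in auto)
  then show ?thesis by simp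
qed

lemma fs_single:
  fixes n t :: nat
  assumes "t < n \<Longrightarrow> a \<in> carrier R"
  shows "(\<Oplus>j\<in>{..<n}. if j = t then a else \<zero>) = (if t < n then a else \<zero>)"
proof (cases "t < n")
  case True
  have "(\<Oplus>j\<in>{..<n}. if j = t then (\<lambda>_. a) j else \<zero>) = (\<lambda>_. a) t"
    by (rule add.finprod_singleton_swap) (use True assms in auto)
  then show ?thesis using True by simp
next
  case False
  then have "(\<Oplus>j\<in>{..<n}. if j = t then a else \<zero>) = \<zero>" by (intro add.finprod_one_eqI) auto
  then show ?thesis using False by simp
qed

lemma fs_zero: "(\<And>j. j \<in> A \<Longrightarrow> g j = \<zero>) \<Longrightarrow> (\<Oplus>j\<in>A. g j) = \<zero>"
  by (intro add.finprod_one_eqI) auto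

lemma dp_carr: "is_mat R (r k) (r (Suc k)) (d k) \<Longrightarrow> dp R r d k i j \<in> carrier R"
  unfolding dp_def is_mat_def by auto

lemma dp_is_mat: assumes "is_mat R (r k) (r (Suc k)) (d k)" shows "is_mat R (rp r k) (rp r (Suc k)) (dp R r d k)"
  using dp_carr[of r k d, OF assms] unfolding is_mat_def by auto

lemma cobdry_dp:
  assumes d: "is_mat R (r k) (r (Suc k)) (d k)" and u: "\<And>j. j < rp r k \<Longrightarrow> u j \<in> fvec R p"
  shows "cobdry R (rp r k) (dp R r d k) u l =
    (if l < r (Suc k) then cobdry R (r k) (d k) u l
     else if l < r (Suc k) + cc r k then u (r k + cmr r k + (l - r (Suc k))) else (\<lambda>_. \<zero>))"
proof
  fix i
  define j0 where "j0 = r k + cmr r k + (l - r (Suc k))"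
  define A where "A j = (if j < r k then (if l < r (Suc k) then d k j l \<otimes> u j i else \<zero>) else \<zero>)" for j
  define B where "B j = (if j = j0 then (if r (Suc k) \<le> l then u j0 i else \<zero>) else \<zero>)" for j
  have uc: "\<And>j. j < rp r k \<Longrightarrow> u j i \<in> carrier R" using coch_carr[of "rp r k" u p _ i, OF u] by blast
  have rk: "r k \<le> rp r k" unfolding rp_def by simp
  have dc: "\<And>j. j < r k \<Longrightarrow> l < r (Suc k) \<Longrightarrow> d k j l \<in> carrier R" using d unfolding is_mat_def by auto
  have Ac: "\<And>j. j < rp r k \<Longrightarrow> A j \<in> carrier R" unfolding A_def using dc uc rk by auto
  have Bc: "\<And>j. j < rp r k \<Longrightarrow> B j \<in> carrier R" unfolding B_def using uc by auto
  have sumeq: "\<And>j. j < rp r k \<Longrightarrow> dp R r d k j l \<otimes> u j i = A j \<oplus> B j"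
  proof -
    fix j assume j: "j < rp r k"
    have T1: "(if j < r k \<and> l < r (Suc k) then d k j l else \<zero>) \<otimes> u j i = A j"
      unfolding A_def using uc[OF j] by auto
    have T2: "(if r k + cmr r k \<le> j \<and> l = r (Suc k) + (j - r k - cmr r k) then \<one> else \<zero>) \<otimes> u j i = B j"
      unfolding B_def j0_def using uc[OF j] by auto
    have "dp R r d k j l \<otimes> u j i = (if j < r k \<and> l < r (Suc k) then d k j l else \<zero>) \<otimes> u j i \<oplus>
       (if r k + cmr r k \<le> j \<and> l = r (Suc k) + (j - r k - cmr r k) then \<one> else \<zero>) \<otimes> u j i"
      unfolding dp_def by (rule l_distr) (use dc uc[OF j] in auto)
    then show "dp R r d k j l \<otimes> u j i = A j \<oplus> B j" using T1 T2 by simp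
  qed
  have "cobdry R (rp r k) (dp R r d k) u l i = (\<Oplus>j\<in>{..<rp r k}. A j \<oplus> B j)"
    unfolding cobdry_def by (rule finsum_cong') (use sumeq Ac Bc in auto)
  also have "\<dots> = (\<Oplus>j\<in>{..<rp r k}. A j) \<oplus> (\<Oplus>j\<in>{..<rp r k}. B j)"
    by (rule finsum_addf) (use Ac Bc in auto)
  also have "(\<Oplus>j\<in>{..<rp r k}. A j) = (if l < r (Suc k) then cobdry R (r k) (d k) u l i else \<zero>)"
  proof (cases "l < r (Suc k)")
    case True
    have "A = (\<lambda>j. if j < r k then d k j l \<otimes> u j i else \<zero>)"
      by (rule ext) (simp add: A_def True)
    then have "(\<Oplus>j\<in>{..<rp r k}. A j) = (\<Oplus>j\<in>{..<rp r k}. if j < r k then d k j l \<otimes> u j i else \<zero>)"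
      by simp
    also have "\<dots> = (\<Oplus>j\<in>{..<r k}. d k j l \<otimes> u j i)"
      by (rule fs_prefix[OF rk]) (use dc uc rk True in auto)
    finally show ?thesis using True unfolding cobdry_def by simp
  next
    case False
    then show ?thesis unfolding A_def by (simp add: fs_zero)
  qed
  also have "(\<Oplus>j\<in>{..<rp r k}. B j) = (if j0 < rp r k \<and> r (Suc k) \<le> l then u j0 i else \<zero>)"
  proof (cases "r (Suc k) \<le> l")
    case True
    have "B = (\<lambda>j. if j = j0 then u j0 i else \<zero>)"
      by (rule ext) (simp add: B_def True)
    then have "(\<Oplus>j\<in>{..<rp r k}. B j) = (\<Oplus>j\<in>{..<rp r k}. if j = j0 then u j0 i else \<zero>)"
      by simp
    also have "\<dots> = (if j0 < rp r k then u j0 i else \<zero>)"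
      by (rule fs_single) (use uc in auto)
    finally show ?thesis using True by simp
  next
    case False
    then show ?thesis unfolding B_def by (simp add: fs_zero)
  qed
  finally have E: "cobdry R (rp r k) (dp R r d k) u l i =
     (if l < r (Suc k) then cobdry R (r k) (d k) u l i else \<zero>) \<oplus> (if j0 < rp r k \<and> r (Suc k) \<le> l then u j0 i else \<zero>)" .
  have j0: "r (Suc k) \<le> l \<Longrightarrow> j0 < rp r k \<longleftrightarrow> l < r (Suc k) + cc r k"
    unfolding j0_def rp_def by auto
  have cobc: "l < r (Suc k) \<Longrightarrow> cobdry R (r k) (d k) u l i \<in> carrier R"
    unfolding cobdry_def by (rule finsum_closed) (use dc uc rk in \<open>auto intro!: m_closed\<close>)
  show "cobdry R (rp r k) (dp R r d k) u l i =
    (if l < r (Suc k) then cobdry R (r k) (d k) u l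
     else if l < r (Suc k) + cc r k then u (r k + cmr r k + (l - r (Suc k))) else (\<lambda>_. \<zero>)) i"
  proof (cases "l < r (Suc k)")
    case True
    then show ?thesis using E cobc by simp
  next
    case False
    then have "j0 < rp r k \<Longrightarrow> u j0 i \<in> carrier R" using uc by blast
    then show ?thesis using E False j0 by (auto simp: j0_def)
  qed
qed

end



context cring begin

lemma zero_mimg: "is_mat R p q \<psi> \<Longrightarrow> (\<lambda>_. \<zero>) \<in> mimg R p q \<psi>"
proof -
  assume psi: "is_mat R p q \<psi>"
  have "\<And>i. i < p \<Longrightarrow> (\<Oplus>j\<in>{..<q}. \<psi> i j \<otimes> \<zero>) = \<zero>"
    using psi unfolding is_mat_def by (intro fs_zero) auto
  then have "mv R p q \<psi> (\<lambda>_. \<zero>) = (\<lambda>_. \<zero>)"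
    unfolding mv_def by auto
  then show ?thesis unfolding mimg_def using zero_fvec by (metis image_eqI)
qed

lemma vsub_zero: "a \<in> fvec R p \<Longrightarrow> vsub R a (\<lambda>_. \<zero>) = a"
  unfolding vsub_def using fvec_carr by (auto simp: minus_eq)

lemma vsub_self: "a \<in> fvec R p \<Longrightarrow> vsub R a a = (\<lambda>_. \<zero>)"
  unfolding vsub_def using fvec_carr by (auto simp: minus_eq r_neg)

lemma ext_pad:
  assumes d: "\<And>k. is_mat R (r k) (r (Suc k)) (d k)" and psi: "is_mat R p q \<psi>"
  shows "ext_nonzero R (rp r) (dp R r d) p q \<psi> k \<longleftrightarrow> ext_nonzero R r d p q \<psi> k"
proof
  have z: "(\<lambda>_. \<zero>) \<in> mimg R p q \<psi>" using zero_mimg[OF psi] .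
  assume "ext_nonzero R (rp r) (dp R r d) p q \<psi> k"
  then obtain u where u: "u \<in> cochain R p (rp r k)"
    and coc: "\<forall>l < rp r (Suc k). cobdry R (rp r k) (dp R r d k) u l \<in> mimg R p q \<psi>"
    and nb: "\<not> (case k of 0 \<Rightarrow> (\<forall>j < rp r 0. u j \<in> mimg R p q \<psi>)
            | Suc k' \<Rightarrow> (\<exists>w \<in> cochain R p (rp r k').
                 \<forall>j < rp r k. vsub R (u j) (cobdry R (rp r k') (dp R r d k') w j) \<in> mimg R p q \<psi>))"
    unfolding ext_nonzero_def by blast
  have uf: "\<And>j. j < rp r k \<Longrightarrow> u j \<in> fvec R p" using u unfolding cochain_def by auto
  have rle: "\<And>k. r k \<le> rp r k" unfolding rp_def by simp
  have uc: "u \<in> cochain R p (r k)" using uf rle[of k] unfolding cochain_def by auto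
  have coc': "\<forall>l < r (Suc k). cobdry R (r k) (d k) u l \<in> mimg R p q \<psi>"
  proof (intro allI impI)
    fix l assume l: "l < r (Suc k)"
    then have "l < rp r (Suc k)" using rle[of "Suc k"] by simp
    then have "cobdry R (rp r k) (dp R r d k) u l \<in> mimg R p q \<psi>" using coc by blast
    then show "cobdry R (r k) (d k) u l \<in> mimg R p q \<psi>"
      using cobdry_dp[of r k d u p l, OF d uf] l by simp
  qed
  have nb': "\<not> (case k of 0 \<Rightarrow> (\<forall>j < r 0. u j \<in> mimg R p q \<psi>)
            | Suc k' \<Rightarrow> (\<exists>w \<in> cochain R p (r k').
                 \<forall>j < r k. vsub R (u j) (cobdry R (r k') (d k') w j) \<in> mimg R p q \<psi>))"
  proof (cases k)
    case 0
    then show ?thesis using nb by (simp add: rp_0)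
  next
    case (Suc k')
    show ?thesis
    proof
      assume "case k of 0 \<Rightarrow> (\<forall>j < r 0. u j \<in> mimg R p q \<psi>)
            | Suc k' \<Rightarrow> (\<exists>w \<in> cochain R p (r k').
                 \<forall>j < r k. vsub R (u j) (cobdry R (r k') (d k') w j) \<in> mimg R p q \<psi>)"
      then obtain w where w: "w \<in> cochain R p (r k')"
        and wc: "\<forall>j < r k. vsub R (u j) (cobdry R (r k') (d k') w j) \<in> mimg R p q \<psi>"
        using Suc by auto
      have wf: "\<And>j. j < r k' \<Longrightarrow> w j \<in> fvec R p" using w unfolding cochain_def by auto
      define W where "W = (\<lambda>j. if j < r k' then w j else if j < r k' + cmr r k' then (\<lambda>_. \<zero>)
                                 else u (r k + (j - r k' - cmr r k')))"
      have Wf: "\<And>j. j < rp r k' \<Longrightarrow> W j \<in> fvec R p"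
      proof -
        fix j assume j: "j < rp r k'"
        show "W j \<in> fvec R p"
        proof (cases "j < r k' + cmr r k'")
          case True then show ?thesis unfolding W_def using wf zero_fvec by auto
        next
          case False
          have "r k + (j - r k' - cmr r k') < rp r k"
            using j False Suc unfolding rp_def by (simp add: cc_Suc)
          then show ?thesis unfolding W_def using False uf by auto
        qed
      qed
      have "\<forall>j < rp r k. vsub R (u j) (cobdry R (rp r k') (dp R r d k') W j) \<in> mimg R p q \<psi>"
      proof (intro allI impI)
        fix j assume j: "j < rp r k"
        have cf: "cobdry R (rp r k') (dp R r d k') W j =
           (if j < r (Suc k') then cobdry R (r k') (d k') W j
            else if j < r (Suc k') + cc r k' then W (r k' + cmr r k' + (j - r (Suc k'))) else (\<lambda>_. \<zero>))"
          using cobdry_dp[of r k' d W p j, OF d Wf] .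
        show "vsub R (u j) (cobdry R (rp r k') (dp R r d k') W j) \<in> mimg R p q \<psi>"
        proof (cases "j < r k")
          case True
          have dj: "\<And>i. i < r k' \<Longrightarrow> d k' i j \<in> carrier R" using d[of k'] True Suc unfolding is_mat_def by auto
          have "cobdry R (r k') (d k') W j = cobdry R (r k') (d k') w j"
            by (rule cobdry_cong[of "r k'" W w p "d k'" j, OF _ wf dj]) (simp add: W_def)
          then show ?thesis using cf True Suc wc by simp
        next
          case False
          note F = False
          show ?thesis
          proof (cases "j < r k + cc r k'")
            case True
            have "W (r k' + cmr r k' + (j - r k)) = u j" unfolding W_def using F by auto
            then show ?thesis using cf F True Suc vsub_self[OF uf[OF j]] z by simp
          next
            case False
            define m where "m = j - r k - cmr r k"
            have jm: "j = r k + cmr r k + m" "m < cc r k" using F False j Suc unfolding m_def rp_def by auto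
            have "r (Suc k) + m < rp r (Suc k)" using jm unfolding rp_def by simp
            then have "cobdry R (rp r k) (dp R r d k) u (r (Suc k) + m) \<in> mimg R p q \<psi>" using coc by simp
            then have "u j \<in> mimg R p q \<psi>" using cobdry_dp[of r k d u p "r (Suc k) + m", OF d uf] jm by simp
            then show ?thesis using cf F False Suc vsub_zero[OF uf[OF j]] by simp
          qed
        qed
      qed
      moreover have "W \<in> cochain R p (rp r k')" unfolding cochain_def using Wf by auto
      ultimately show False using nb Suc by auto
    qed
  qed
  show "ext_nonzero R r d p q \<psi> k" unfolding ext_nonzero_def using uc coc' nb' by blast
next
  have z: "(\<lambda>_. \<zero>) \<in> mimg R p q \<psi>" using zero_mimg[OF psi] .
  have rle: "\<And>k. r k \<le> rp r k" unfolding rp_def by simp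
  assume "ext_nonzero R r d p q \<psi> k"
  then obtain u where u: "u \<in> cochain R p (r k)"
    and coc: "\<forall>l < r (Suc k). cobdry R (r k) (d k) u l \<in> mimg R p q \<psi>"
    and nb: "\<not> (case k of 0 \<Rightarrow> (\<forall>j < r 0. u j \<in> mimg R p q \<psi>)
            | Suc k' \<Rightarrow> (\<exists>w \<in> cochain R p (r k').
                 \<forall>j < r k. vsub R (u j) (cobdry R (r k') (d k') w j) \<in> mimg R p q \<psi>))"
    unfolding ext_nonzero_def by blast
  have uf: "\<And>j. j < r k \<Longrightarrow> u j \<in> fvec R p" using u unfolding cochain_def by auto
  define U where "U = (\<lambda>j. if j < r k then u j else (\<lambda>_. \<zero>))"
  have Uf: "\<And>j. j < rp r k \<Longrightarrow> U j \<in> fvec R p" unfolding U_def using uf zero_fvec by auto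
  have Uc: "U \<in> cochain R p (rp r k)" unfolding cochain_def using Uf by auto
  have coc': "\<forall>l < rp r (Suc k). cobdry R (rp r k) (dp R r d k) U l \<in> mimg R p q \<psi>"
  proof (intro allI impI)
    fix l assume l: "l < rp r (Suc k)"
    have cf: "cobdry R (rp r k) (dp R r d k) U l =
           (if l < r (Suc k) then cobdry R (r k) (d k) U l
            else if l < r (Suc k) + cc r k then U (r k + cmr r k + (l - r (Suc k))) else (\<lambda>_. \<zero>))"
      using cobdry_dp[of r k d U p l, OF d Uf] .
    show "cobdry R (rp r k) (dp R r d k) U l \<in> mimg R p q \<psi>"
    proof (cases "l < r (Suc k)")
      case True
      have dl: "\<And>i. i < r k \<Longrightarrow> d k i l \<in> carrier R" using d[of k] True unfolding is_mat_def by auto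
      have "cobdry R (r k) (d k) U l = cobdry R (r k) (d k) u l"
        by (rule cobdry_cong[of "r k" U u p "d k" l, OF _ uf dl]) (simp add: U_def)
      then show ?thesis using cf True coc by simp
    next
      case False
      have "U (r k + cmr r k + (l - r (Suc k))) = (\<lambda>_. \<zero>)" unfolding U_def by simp
      then show ?thesis using cf z False by simp
    qed
  qed
  have nb': "\<not> (case k of 0 \<Rightarrow> (\<forall>j < rp r 0. U j \<in> mimg R p q \<psi>)
            | Suc k' \<Rightarrow> (\<exists>w \<in> cochain R p (rp r k').
                 \<forall>j < rp r k. vsub R (U j) (cobdry R (rp r k') (dp R r d k') w j) \<in> mimg R p q \<psi>))"
  proof (cases k)
    case 0
    then show ?thesis using nb by (simp add: rp_0 U_def)
  next
    case (Suc k')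
    show ?thesis
    proof
      assume "case k of 0 \<Rightarrow> (\<forall>j < rp r 0. U j \<in> mimg R p q \<psi>)
            | Suc k' \<Rightarrow> (\<exists>w \<in> cochain R p (rp r k').
                 \<forall>j < rp r k. vsub R (U j) (cobdry R (rp r k') (dp R r d k') w j) \<in> mimg R p q \<psi>)"
      then obtain W where W: "W \<in> cochain R p (rp r k')"
        and wc: "\<forall>j < rp r k. vsub R (U j) (cobdry R (rp r k') (dp R r d k') W j) \<in> mimg R p q \<psi>"
        using Suc by auto
      have Wf: "\<And>j. j < rp r k' \<Longrightarrow> W j \<in> fvec R p" using W unfolding cochain_def by auto
      have "\<forall>j < r k. vsub R (u j) (cobdry R (r k') (d k') W j) \<in> mimg R p q \<psi>"
      proof (intro allI impI)
        fix j assume j: "j < r k"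
        have "j < rp r k" using j rle[of k] by simp
        then have "vsub R (U j) (cobdry R (rp r k') (dp R r d k') W j) \<in> mimg R p q \<psi>" using wc by blast
        moreover have "U j = u j" using j by (simp add: U_def)
        ultimately show "vsub R (u j) (cobdry R (r k') (d k') W j) \<in> mimg R p q \<psi>"
          using cobdry_dp[of r k' d W p j, OF d Wf] j Suc by simp
      qed
      moreover have "W \<in> cochain R p (r k')" using Wf rle[of k'] unfolding cochain_def by auto
      ultimately show False using nb Suc by auto
    qed
  qed
  show "ext_nonzero R (rp r) (dp R r d) p q \<psi> k" unfolding ext_nonzero_def using Uc coc' nb' by blast
qed

end



definition rs :: "('a, 'm) ring_scheme \<Rightarrow> nat \<Rightarrow> (nat \<Rightarrow> 'a) \<Rightarrow> (nat \<Rightarrow> 'a)" where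
  "rs R n v = (\<lambda>j. if j < n then v j else \<zero>\<^bsub>R\<^esub>)"

context cring begin

lemma mv_fvec:
  assumes D: "is_mat R m n D" and v: "\<And>j. j < n \<Longrightarrow> v j \<in> carrier R"
  shows "mv R m n D v \<in> fvec R m"
  unfolding fvec_def mv_def using D v unfolding is_mat_def by (auto intro!: finsum_closed)

lemma rs_fvec: "(\<And>j. j < n \<Longrightarrow> v j \<in> carrier R) \<Longrightarrow> rs R n v \<in> fvec R n"
  unfolding rs_def fvec_def by auto

lemma mv_rs:
  assumes D: "is_mat R m n D" and v: "\<And>j. j < n \<Longrightarrow> v j \<in> carrier R"
  shows "mv R m n D (rs R n v) = mv R m n D v"
  unfolding mv_def
proof
  fix i show "(if i < m then \<Oplus>j\<in>{..<n}. D i j \<otimes> rs R n v j else \<zero>) = (if i < m then \<Oplus>j\<in>{..<n}. D i j \<otimes> v j else \<zero>)"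
  proof (cases "i < m")
    case True
    have "(\<Oplus>j\<in>{..<n}. D i j \<otimes> rs R n v j) = (\<Oplus>j\<in>{..<n}. D i j \<otimes> v j)"
      by (rule finsum_cong') (use D v True in \<open>auto simp: rs_def is_mat_def\<close>)
    then show ?thesis by simp
  qed simp
qed

lemma mv_dp:
  assumes d: "\<And>k. is_mat R (r k) (r (Suc k)) (d k)" and a: "\<And>j. j < rp r (Suc k) \<Longrightarrow> a j \<in> carrier R"
  shows "mv R (rp r k) (rp r (Suc k)) (dp R r d k) a i =
    (if i < rp r k then
       (if i < r k then mv R (r k) (r (Suc k)) (d k) a i else \<zero>) \<oplus>
       (if r k + cmr r k \<le> i then a (r (Suc k) + (i - r k - cmr r k)) else \<zero>)
     else \<zero>)"
proof (cases "i < rp r k")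
  case False then show ?thesis unfolding mv_def by simp
next
  case True
  note i = True
  define j1 where "j1 = r (Suc k) + (i - r k - cmr r k)"
  define A where "A j = (if j < r (Suc k) then (if i < r k then d k i j \<otimes> a j else \<zero>) else \<zero>)" for j
  define B where "B j = (if j = j1 then (if r k + cmr r k \<le> i then a j1 else \<zero>) else \<zero>)" for j
  have rk: "r (Suc k) \<le> rp r (Suc k)" unfolding rp_def by simp
  have dc: "\<And>j. j < r (Suc k) \<Longrightarrow> i < r k \<Longrightarrow> d k i j \<in> carrier R" using d[of k] unfolding is_mat_def by auto
  have j1: "r k + cmr r k \<le> i \<Longrightarrow> j1 < rp r (Suc k)" using i unfolding j1_def rp_def by simp
  have Ac: "\<And>j. j < rp r (Suc k) \<Longrightarrow> A j \<in> carrier R" unfolding A_def using dc a rk by auto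
  have Bc: "\<And>j. j < rp r (Suc k) \<Longrightarrow> B j \<in> carrier R" unfolding B_def using a j1 by auto
  have sumeq: "\<And>j. j < rp r (Suc k) \<Longrightarrow> dp R r d k i j \<otimes> a j = A j \<oplus> B j"
  proof -
    fix j assume j: "j < rp r (Suc k)"
    have T1: "(if i < r k \<and> j < r (Suc k) then d k i j else \<zero>) \<otimes> a j = A j"
      unfolding A_def using a[OF j] by auto
    have T2: "(if r k + cmr r k \<le> i \<and> j = r (Suc k) + (i - r k - cmr r k) then \<one> else \<zero>) \<otimes> a j = B j"
      unfolding B_def j1_def using a[OF j] by auto
    have "dp R r d k i j \<otimes> a j = (if i < r k \<and> j < r (Suc k) then d k i j else \<zero>) \<otimes> a j \<oplus>
       (if r k + cmr r k \<le> i \<and> j = r (Suc k) + (i - r k - cmr r k) then \<one> else \<zero>) \<otimes> a j"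
      unfolding dp_def by (rule l_distr) (use dc a[OF j] in auto)
    then show "dp R r d k i j \<otimes> a j = A j \<oplus> B j" using T1 T2 by simp
  qed
  have "mv R (rp r k) (rp r (Suc k)) (dp R r d k) a i = (\<Oplus>j\<in>{..<rp r (Suc k)}. A j \<oplus> B j)"
    unfolding mv_def using i by simp (rule finsum_cong', use sumeq Ac Bc in auto)
  also have "\<dots> = (\<Oplus>j\<in>{..<rp r (Suc k)}. A j) \<oplus> (\<Oplus>j\<in>{..<rp r (Suc k)}. B j)"
    by (rule finsum_addf) (use Ac Bc in auto)
  also have "(\<Oplus>j\<in>{..<rp r (Suc k)}. A j) = (if i < r k then mv R (r k) (r (Suc k)) (d k) a i else \<zero>)"
  proof (cases "i < r k")
    case True
    have "A = (\<lambda>j. if j < r (Suc k) then d k i j \<otimes> a j else \<zero>)"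
      by (rule ext) (simp add: A_def True)
    then have "(\<Oplus>j\<in>{..<rp r (Suc k)}. A j) = (\<Oplus>j\<in>{..<rp r (Suc k)}. if j < r (Suc k) then d k i j \<otimes> a j else \<zero>)"
      by simp
    also have "\<dots> = (\<Oplus>j\<in>{..<r (Suc k)}. d k i j \<otimes> a j)"
      by (rule fs_prefix[OF rk]) (use dc a rk True in auto)
    finally show ?thesis using True unfolding mv_def by simp
  next
    case False
    then show ?thesis unfolding A_def by (simp add: fs_zero)
  qed
  also have "(\<Oplus>j\<in>{..<rp r (Suc k)}. B j) = (if r k + cmr r k \<le> i then a j1 else \<zero>)"
  proof (cases "r k + cmr r k \<le> i")
    case True
    have "B = (\<lambda>j. if j = j1 then a j1 else \<zero>)"
      by (rule ext) (simp add: B_def True)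
    then have "(\<Oplus>j\<in>{..<rp r (Suc k)}. B j) = (\<Oplus>j\<in>{..<rp r (Suc k)}. if j = j1 then a j1 else \<zero>)"
      by simp
    also have "\<dots> = a j1"
      using fs_single[of j1 "rp r (Suc k)" "a j1"] j1[OF True] a by simp
    finally show ?thesis using True by simp
  next
    case False
    then show ?thesis unfolding B_def by (simp add: fs_zero)
  qed
  finally show ?thesis using i unfolding j1_def by simp
qed

end



context cring begin

lemma mv_carr: "is_mat R m n D \<Longrightarrow> (\<And>j. j < n \<Longrightarrow> v j \<in> carrier R) \<Longrightarrow> mv R m n D v i \<in> carrier R"
  using mv_fvec fvec_carr by blast

lemma mvdp_x:
  assumes d: "\<And>k. is_mat R (r k) (r (Suc k)) (d k)" and a: "\<And>j. j < rp r (Suc k) \<Longrightarrow> a j \<in> carrier R"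
    and i: "i < r k"
  shows "mv R (rp r k) (rp r (Suc k)) (dp R r d k) a i = mv R (r k) (r (Suc k)) (d k) a i"
proof -
  have "i < rp r k" using i unfolding rp_def by simp
  moreover have "\<And>j. j < r (Suc k) \<Longrightarrow> a j \<in> carrier R" using a unfolding rp_def by simp
  ultimately show ?thesis using mv_dp[where r=r and d=d and k=k and i=i, OF d a] i mv_carr[OF d[of k]] by simp
qed

lemma mvdp_v:
  assumes d: "\<And>k. is_mat R (r k) (r (Suc k)) (d k)" and a: "\<And>j. j < rp r (Suc k) \<Longrightarrow> a j \<in> carrier R"
    and i: "r k \<le> i" "i < r k + cmr r k"
  shows "mv R (rp r k) (rp r (Suc k)) (dp R r d k) a i = \<zero>"
  using mv_dp[where r=r and d=d and k=k and i=i, OF d a] i by simp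

lemma mvdp_u:
  assumes d: "\<And>k. is_mat R (r k) (r (Suc k)) (d k)" and a: "\<And>j. j < rp r (Suc k) \<Longrightarrow> a j \<in> carrier R"
    and i: "r k + cmr r k \<le> i" "i < rp r k"
  shows "mv R (rp r k) (rp r (Suc k)) (dp R r d k) a i = a (r (Suc k) + (i - r k - cmr r k))"
proof -
  have "r (Suc k) + (i - r k - cmr r k) < rp r (Suc k)" using i unfolding rp_def by simp
  then show ?thesis using mv_dp[where r=r and d=d and k=k and i=i, OF d a] i a by simp
qed

lemma mvdp_out: "rp r k \<le> i \<Longrightarrow> mv R (rp r k) (rp r (Suc k)) (dp R r d k) a i = \<zero>"
  unfolding mv_def by simp

lemma free_resolution_dp:
  assumes F: "free_resolution R r d"
  shows "free_resolution R (rp r) (dp R r d)"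
proof -
  have d: "\<And>k. is_mat R (r k) (r (Suc k)) (d k)" using F unfolding free_resolution_def by blast
  have ex: "\<And>k. {v \<in> fvec R (r (Suc k)). mv R (r k) (r (Suc k)) (d k) v = (\<lambda>_. \<zero>)}
          = mimg R (r (Suc k)) (r (Suc (Suc k))) (d (Suc k))" using F unfolding free_resolution_def by blast
  have "\<forall>k. {v \<in> fvec R (rp r (Suc k)). mv R (rp r k) (rp r (Suc k)) (dp R r d k) v = (\<lambda>_. \<zero>)}
          = mimg R (rp r (Suc k)) (rp r (Suc (Suc k))) (dp R r d (Suc k))"
  proof
    fix k
    show "{v \<in> fvec R (rp r (Suc k)). mv R (rp r k) (rp r (Suc k)) (dp R r d k) v = (\<lambda>_. \<zero>)}
          = mimg R (rp r (Suc k)) (rp r (Suc (Suc k))) (dp R r d (Suc k))"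
    proof
      show "{v \<in> fvec R (rp r (Suc k)). mv R (rp r k) (rp r (Suc k)) (dp R r d k) v = (\<lambda>_. \<zero>)}
          \<subseteq> mimg R (rp r (Suc k)) (rp r (Suc (Suc k))) (dp R r d (Suc k))"
      proof
        fix a assume "a \<in> {v \<in> fvec R (rp r (Suc k)). mv R (rp r k) (rp r (Suc k)) (dp R r d k) v = (\<lambda>_. \<zero>)}"
        then have af: "a \<in> fvec R (rp r (Suc k))" and az: "mv R (rp r k) (rp r (Suc k)) (dp R r d k) a = (\<lambda>_. \<zero>)" by auto
        have ac: "\<And>j. a j \<in> carrier R" using fvec_carr[OF af] .
        have ac1: "\<And>j. j < r (Suc k) \<Longrightarrow> a j \<in> carrier R" using ac by simp
        define a0 where "a0 = rs R (r (Suc k)) a"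
        have a0f: "a0 \<in> fvec R (r (Suc k))" unfolding a0_def using rs_fvec ac by blast
        have "mv R (r k) (r (Suc k)) (d k) a0 = (\<lambda>_. \<zero>)"
        proof
          fix i
          show "mv R (r k) (r (Suc k)) (d k) a0 i = \<zero>"
          proof (cases "i < r k")
            case True
            have "mv R (r k) (r (Suc k)) (d k) a0 i = mv R (r k) (r (Suc k)) (d k) a i"
              unfolding a0_def using mv_rs[OF d[of k] ac1] by simp
            also have "\<dots> = mv R (rp r k) (rp r (Suc k)) (dp R r d k) a i"
              using mvdp_x[where r=r and d=d, OF d _ True] ac by simp
            finally show ?thesis using az by simp
          qed (simp add: mv_def)
        qed
        then have "a0 \<in> mimg R (r (Suc k)) (r (Suc (Suc k))) (d (Suc k))" using ex[of k] a0f by blast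
        then obtain b0 where b0: "b0 \<in> fvec R (r (Suc (Suc k)))" "a0 = mv R (r (Suc k)) (r (Suc (Suc k))) (d (Suc k)) b0"
          unfolding mimg_def by blast
        define b where "b = (\<lambda>j. if j < r (Suc (Suc k)) then b0 j
            else if j < r (Suc (Suc k)) + cmr r (Suc (Suc k)) then a (r (Suc k) + cmr r (Suc k) + (j - r (Suc (Suc k))))
            else \<zero>)"
        have bc: "\<And>j. b j \<in> carrier R" unfolding b_def using fvec_carr[OF b0(1)] ac by auto
        have bf: "b \<in> fvec R (rp r (Suc (Suc k)))" unfolding fvec_def using bc by (auto simp: b_def rp_def)
        have rsb: "rs R (r (Suc (Suc k))) b = rs R (r (Suc (Suc k))) b0" unfolding rs_def b_def by auto
        have rsb0: "rs R (r (Suc (Suc k))) b0 = b0" unfolding rs_def using b0(1) unfolding fvec_def by auto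
        have "mv R (rp r (Suc k)) (rp r (Suc (Suc k))) (dp R r d (Suc k)) b = a"
        proof
          fix i
          show "mv R (rp r (Suc k)) (rp r (Suc (Suc k))) (dp R r d (Suc k)) b i = a i"
          proof (cases "i < r (Suc k)")
            case True
            have "mv R (rp r (Suc k)) (rp r (Suc (Suc k))) (dp R r d (Suc k)) b i = mv R (r (Suc k)) (r (Suc (Suc k))) (d (Suc k)) b i"
              using mvdp_x[where r=r and d=d, OF d _ True] bc by simp
            also have "\<dots> = mv R (r (Suc k)) (r (Suc (Suc k))) (d (Suc k)) (rs R (r (Suc (Suc k))) b) i"
              using mv_rs[OF d[of "Suc k"], of b] bc by simp
            also have "\<dots> = mv R (r (Suc k)) (r (Suc (Suc k))) (d (Suc k)) (rs R (r (Suc (Suc k))) b0) i"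
              by (simp only: rsb)
            also have "\<dots> = mv R (r (Suc k)) (r (Suc (Suc k))) (d (Suc k)) b0 i"
              by (simp only: rsb0)
            also have "\<dots> = a0 i" using b0(2) by simp
            also have "\<dots> = a i" using True by (simp add: a0_def rs_def)
            finally show ?thesis .
          next
            case F1: False
            show ?thesis
            proof (cases "i < r (Suc k) + cmr r (Suc k)")
              case True
              define m where "m = i - r (Suc k)"
              have m: "i = r (Suc k) + m" "m < cc r k" using F1 True unfolding m_def by auto
              have i': "r k + cmr r k \<le> r k + cmr r k + m" "r k + cmr r k + m < rp r k" using m(2) unfolding rp_def by auto
              have "mv R (rp r k) (rp r (Suc k)) (dp R r d k) a (r k + cmr r k + m) = a i"
                using mvdp_u[where r=r and d=d, OF d _ i'] ac m(1) by simp
              moreover have "mv R (rp r k) (rp r (Suc k)) (dp R r d k) a (r k + cmr r k + m) = \<zero>" using az by simp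
              ultimately have "a i = \<zero>" by simp
              then show ?thesis using mvdp_v[where r=r and d=d, OF d _ _ True] bc F1 by simp
            next
              case F2: False
              show ?thesis
              proof (cases "i < rp r (Suc k)")
                case True
                have "mv R (rp r (Suc k)) (rp r (Suc (Suc k))) (dp R r d (Suc k)) b i
                   = b (r (Suc (Suc k)) + (i - r (Suc k) - cmr r (Suc k)))"
                  using mvdp_u[where r=r and d=d, OF d _ _ True] bc F2 by simp
                also have "\<dots> = a i"
                  using F2 True unfolding b_def rp_def by auto
                finally show ?thesis .
              next
                case False
                then show ?thesis using mvdp_out af unfolding fvec_def by simp
              qed
            qed
          qed
        qed
        then show "a \<in> mimg R (rp r (Suc k)) (rp r (Suc (Suc k))) (dp R r d (Suc k))"
          unfolding mimg_def using bf by blast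
      qed
    next
      show "mimg R (rp r (Suc k)) (rp r (Suc (Suc k))) (dp R r d (Suc k))
          \<subseteq> {v \<in> fvec R (rp r (Suc k)). mv R (rp r k) (rp r (Suc k)) (dp R r d k) v = (\<lambda>_. \<zero>)}"
      proof
        fix a assume "a \<in> mimg R (rp r (Suc k)) (rp r (Suc (Suc k))) (dp R r d (Suc k))"
        then obtain b where bf: "b \<in> fvec R (rp r (Suc (Suc k)))" and ab: "a = mv R (rp r (Suc k)) (rp r (Suc (Suc k))) (dp R r d (Suc k)) b"
          unfolding mimg_def by blast
        have bc: "\<And>j. b j \<in> carrier R" using fvec_carr[OF bf] .
        have af: "a \<in> fvec R (rp r (Suc k))" unfolding ab by (rule mv_fvec[OF dp_is_mat[of r "Suc k" d, OF d]]) (use bc in auto)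
        have ac: "\<And>j. a j \<in> carrier R" using fvec_carr[OF af] .
        define b0 where "b0 = rs R (r (Suc (Suc k))) b"
        have b0f: "b0 \<in> fvec R (r (Suc (Suc k)))" unfolding b0_def using rs_fvec bc by blast
        have "rs R (r (Suc k)) a = mv R (r (Suc k)) (r (Suc (Suc k))) (d (Suc k)) b0"
        proof
          fix j
          show "rs R (r (Suc k)) a j = mv R (r (Suc k)) (r (Suc (Suc k))) (d (Suc k)) b0 j"
          proof (cases "j < r (Suc k)")
            case True
            have "rs R (r (Suc k)) a j = mv R (r (Suc k)) (r (Suc (Suc k))) (d (Suc k)) b j"
              unfolding rs_def ab using True mvdp_x[where r=r and d=d, OF d _ True] bc by simp
            also have "\<dots> = mv R (r (Suc k)) (r (Suc (Suc k))) (d (Suc k)) b0 j"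
              unfolding b0_def using mv_rs[OF d[of "Suc k"], of b] bc by simp
            finally show ?thesis .
          qed (simp add: rs_def mv_def)
        qed
        then have "rs R (r (Suc k)) a \<in> mimg R (r (Suc k)) (r (Suc (Suc k))) (d (Suc k))"
          unfolding mimg_def using b0f by blast
        then have rz: "mv R (r k) (r (Suc k)) (d k) (rs R (r (Suc k)) a) = (\<lambda>_. \<zero>)" using ex[of k] by blast
        have "mv R (rp r k) (rp r (Suc k)) (dp R r d k) a = (\<lambda>_. \<zero>)"
        proof
          fix i
          show "mv R (rp r k) (rp r (Suc k)) (dp R r d k) a i = \<zero>"
          proof (cases "i < r k")
            case True
            have "mv R (rp r k) (rp r (Suc k)) (dp R r d k) a i = mv R (r k) (r (Suc k)) (d k) a i"
              using mvdp_x[where r=r and d=d, OF d _ True] ac by simp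
            also have "\<dots> = mv R (r k) (r (Suc k)) (d k) (rs R (r (Suc k)) a) i"
              using mv_rs[OF d[of k], of a] ac by simp
            finally show ?thesis using rz by simp
          next
            case F1: False
            show ?thesis
            proof (cases "i < r k + cmr r k")
              case True then show ?thesis using mvdp_v[where r=r and d=d, OF d _ _ True] ac F1 by simp
            next
              case F2: False
              show ?thesis
              proof (cases "i < rp r k")
                case True
                define m where "m = i - r k - cmr r k"
                have m: "m < cmr r (Suc k)" using F2 True unfolding m_def rp_def by auto
                have "mv R (rp r k) (rp r (Suc k)) (dp R r d k) a i = a (r (Suc k) + m)"
                  using mvdp_u[where r=r and d=d, OF d _ _ True] ac F2 unfolding m_def by simp
                also have "\<dots> = \<zero>" unfolding ab using mvdp_v[where r=r and d=d, OF d, of "Suc k" b "r (Suc k) + m"] bc m by simp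
                finally show ?thesis .
              next
                case False then show ?thesis using mvdp_out by simp
              qed
            qed
          qed
        qed
        then show "a \<in> {v \<in> fvec R (rp r (Suc k)). mv R (rp r k) (rp r (Suc k)) (dp R r d k) v = (\<lambda>_. \<zero>)}"
          using af by simp
      qed
    qed
  qed
  then show ?thesis unfolding free_resolution_def using dp_is_mat[where r=r and d=d, OF d] by blast
qed

end



context splitting begin

lemma vm_mv:
  assumes D: "is_mat R m n D" and v: "\<And>j. j < n \<Longrightarrow> v j \<in> carrier R"
  shows "vm (mv R m n D v) = mv S m n (\<lambda>i j. h (D i j)) (vm v)"
  unfolding vm_def mv_def
proof
  fix i
  show "h (if i < m then \<Oplus>j\<in>{..<n}. D i j \<otimes> v j else \<zero>) =
        (if i < m then \<Oplus>\<^bsub>S\<^esub>j\<in>{..<n}. h (D i j) \<otimes>\<^bsub>S\<^esub> h (v j) else \<zero>\<^bsub>S\<^esub>)"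
  proof (cases "i < m")
    case True
    have P: "(\<lambda>j. D i j \<otimes> v j) \<in> {..<n} \<rightarrow> carrier R" using D v True unfolding is_mat_def by auto
    have "h (\<Oplus>j\<in>{..<n}. D i j \<otimes> v j) = (\<Oplus>\<^bsub>S\<^esub>j\<in>{..<n}. h (D i j \<otimes> v j))"
      using hom_finsum[OF P] by (simp add: comp_def)
    also have "\<dots> = (\<Oplus>\<^bsub>S\<^esub>j\<in>{..<n}. h (D i j) \<otimes>\<^bsub>S\<^esub> h (v j))"
    proof (rule S.finsum_cong')
      show "(\<lambda>j. h (D i j) \<otimes>\<^bsub>S\<^esub> h (v j)) \<in> {..<n} \<rightarrow> carrier S"
        using D v True unfolding is_mat_def by auto
      fix j assume "j \<in> {..<n}"
      then show "h (D i j \<otimes> v j) = h (D i j) \<otimes>\<^bsub>S\<^esub> h (v j)" using D v True unfolding is_mat_def by auto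
    qed simp
    finally show ?thesis using True by simp
  qed simp
qed

lemma f_mv:
  assumes D: "is_mat R m n D" and v: "\<And>j. j < n \<Longrightarrow> v j \<in> carrier R"
  shows "f \<otimes> mv R m n D v i = (if i < m then \<Oplus>j\<in>{..<n}. (f \<otimes> D i j) \<otimes> v j else \<zero>)"
proof (cases "i < m")
  case True
  have P: "(\<lambda>j. D i j \<otimes> v j) \<in> {..<n} \<rightarrow> carrier R" using D v True unfolding is_mat_def by auto
  have "f \<otimes> mv R m n D v i = (\<Oplus>j\<in>{..<n}. f \<otimes> (D i j \<otimes> v j))"
    unfolding mv_def using True R.finsum_rdistr[OF _ f_carr P] by simp
  also have "\<dots> = (\<Oplus>j\<in>{..<n}. (f \<otimes> D i j) \<otimes> v j)"
    by (rule R.finsum_cong') (use D v True f_carr in \<open>auto simp: is_mat_def R.m_assoc\<close>)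
  finally show ?thesis using True by simp
next
  case False then show ?thesis unfolding mv_def using f_carr by simp
qed

lemma vec_split:
  assumes x: "\<And>i. x i \<in> carrier R" and y: "\<And>i. y i \<in> carrier R"
    and hv: "vm x = vm y" and fv: "\<And>i. f \<otimes> x i = f \<otimes> y i"
  shows "x = y"
proof
  fix i
  have "h (x i) = h (y i)" using hv unfolding vm_def by meson
  then show "x i = y i" using split_eq[OF x y _ fv] by simp
qed

definition DR where
  "DR r d k i j =
     (if i < r k \<and> j < r (Suc k) then sg (d k i j) else \<zero>) \<oplus>
     (if r k + cmr r k \<le> i \<and> j = r (Suc k) + (i - r k - cmr r k) then e else \<zero>) \<oplus>
     (if i < r k + cmr r k \<and> j = r (Suc k) + cmr r (Suc k) + i then f else \<zero>)"

definition PR where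
  "PR q \<psi> i j = (if j < q then sg (\<psi> i j) else \<zero>) \<oplus> (if j = q + i then f else \<zero>)"

lemma DR_carr: "is_mat S (r k) (r (Suc k)) (d k) \<Longrightarrow> DR r d k i j \<in> carrier R"
  unfolding DR_def is_mat_def using sg_carr e_carr f_carr by auto

lemma DR_is_mat: "is_mat S (r k) (r (Suc k)) (d k) \<Longrightarrow> is_mat R (rp r k) (rp r (Suc k)) (DR r d k)"
  using DR_carr[of r k d] unfolding is_mat_def by blast

lemma h_DR: "is_mat S (r k) (r (Suc k)) (d k) \<Longrightarrow> h (DR r d k i j) = dp S r d k i j"
  unfolding DR_def dp_def is_mat_def using sg_carr e_carr f_carr h_sg h_e h_f by auto

lemma f_DR: "is_mat S (r k) (r (Suc k)) (d k) \<Longrightarrow>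
   f \<otimes> DR r d k i j = (if i < r k + cmr r k \<and> j = r (Suc k) + cmr r (Suc k) + i then f else \<zero>)"
  unfolding DR_def is_mat_def using sg_carr e_carr f_carr f_sg f_e f_idem by (auto simp: R.r_distr)

lemma PR_carr: "is_mat S p q \<psi> \<Longrightarrow> i < p \<Longrightarrow> PR q \<psi> i j \<in> carrier R"
  unfolding PR_def is_mat_def using sg_carr f_carr by auto

lemma PR_is_mat: "is_mat S p q \<psi> \<Longrightarrow> is_mat R p (q + p) (PR q \<psi>)"
  using PR_carr unfolding is_mat_def by blast

lemma h_PR: "is_mat S p q \<psi> \<Longrightarrow> i < p \<Longrightarrow> h (PR q \<psi> i j) = (if j < q then \<psi> i j else \<zero>\<^bsub>S\<^esub>)"
  unfolding PR_def is_mat_def using sg_carr f_carr h_sg h_f by auto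

lemma f_PR: "is_mat S p q \<psi> \<Longrightarrow> i < p \<Longrightarrow> f \<otimes> PR q \<psi> i j = (if j = q + i then f else \<zero>)"
  unfolding PR_def is_mat_def using sg_carr f_carr f_sg f_idem by (auto simp: R.r_distr)

lemma f_mv_DR:
  assumes d: "is_mat S (r k) (r (Suc k)) (d k)" and v: "\<And>j. j < rp r (Suc k) \<Longrightarrow> v j \<in> carrier R"
  shows "f \<otimes> mv R (rp r k) (rp r (Suc k)) (DR r d k) v i =
     (if i < r k + cmr r k then f \<otimes> v (r (Suc k) + cmr r (Suc k) + i) else \<zero>)"
proof -
  have A: "f \<otimes> mv R (rp r k) (rp r (Suc k)) (DR r d k) v i =
     (if i < rp r k then \<Oplus>j\<in>{..<rp r (Suc k)}. (f \<otimes> DR r d k i j) \<otimes> v j else \<zero>)"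
    using f_mv[OF DR_is_mat[of r k d, OF d] v] .
  define j3 where "j3 = r (Suc k) + cmr r (Suc k) + i"
  have j3: "i < r k + cmr r k \<Longrightarrow> j3 < rp r (Suc k)" unfolding j3_def rp_def by (simp add: cc_Suc)
  show ?thesis
  proof (cases "i < r k + cmr r k")
    case True
    have i: "i < rp r k" using True unfolding rp_def by simp
    have "(\<Oplus>j\<in>{..<rp r (Suc k)}. (f \<otimes> DR r d k i j) \<otimes> v j) = (\<Oplus>j\<in>{..<rp r (Suc k)}. if j = j3 then f \<otimes> v j3 else \<zero>)"
      by (rule R.finsum_cong') (use f_DR[of r k d, OF d] True v f_carr j3 in \<open>auto simp: j3_def\<close>)
    also have "\<dots> = f \<otimes> v j3" using R.fs_single[of j3 "rp r (Suc k)" "f \<otimes> v j3"] j3[OF True] v f_carr by simp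
    finally show ?thesis using A i True unfolding j3_def by simp
  next
    case False
    have "\<And>j. j < rp r (Suc k) \<Longrightarrow> (f \<otimes> DR r d k i j) \<otimes> v j = \<zero>" using f_DR[of r k d, OF d] False v by auto
    then have "(\<Oplus>j\<in>{..<rp r (Suc k)}. (f \<otimes> DR r d k i j) \<otimes> v j) = \<zero>" by (intro R.fs_zero) auto
    then show ?thesis using A False by simp
  qed
qed

lemma f_mv_PR:
  assumes psi: "is_mat S p q \<psi>" and v: "\<And>j. j < q + p \<Longrightarrow> v j \<in> carrier R"
  shows "f \<otimes> mv R p (q + p) (PR q \<psi>) v i = (if i < p then f \<otimes> v (q + i) else \<zero>)"
proof (cases "i < p")
  case True
  have "f \<otimes> mv R p (q + p) (PR q \<psi>) v i = (\<Oplus>j\<in>{..<q + p}. (f \<otimes> PR q \<psi> i j) \<otimes> v j)"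
    using f_mv[OF PR_is_mat[OF psi] v] True by simp
  also have "\<dots> = (\<Oplus>j\<in>{..<q + p}. if j = q + i then f \<otimes> v (q + i) else \<zero>)"
    by (rule R.finsum_cong') (use f_PR[OF psi True] v f_carr True in auto)
  also have "\<dots> = f \<otimes> v (q + i)" using R.fs_single[of "q + i" "q + p" "f \<otimes> v (q + i)"] v f_carr True by simp
  finally show ?thesis using True by simp
next
  case False then show ?thesis using f_mv[OF PR_is_mat[OF psi] v] by simp
qed

lemma mv_hPR:
  assumes psi: "is_mat S p q \<psi>" and a: "\<And>j. j < q + p \<Longrightarrow> a j \<in> carrier S"
  shows "mv S p (q + p) (\<lambda>i j. h (PR q \<psi> i j)) a = mv S p q \<psi> a"
  unfolding mv_def
proof
  fix i
  show "(if i < p then \<Oplus>\<^bsub>S\<^esub>j\<in>{..<q + p}. h (PR q \<psi> i j) \<otimes>\<^bsub>S\<^esub> a j else \<zero>\<^bsub>S\<^esub>) =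
        (if i < p then \<Oplus>\<^bsub>S\<^esub>j\<in>{..<q}. \<psi> i j \<otimes>\<^bsub>S\<^esub> a j else \<zero>\<^bsub>S\<^esub>)"
  proof (cases "i < p")
    case True
    have "(\<Oplus>\<^bsub>S\<^esub>j\<in>{..<q + p}. h (PR q \<psi> i j) \<otimes>\<^bsub>S\<^esub> a j) = (\<Oplus>\<^bsub>S\<^esub>j\<in>{..<q + p}. if j < q then \<psi> i j \<otimes>\<^bsub>S\<^esub> a j else \<zero>\<^bsub>S\<^esub>)"
      by (rule S.finsum_cong') (use h_PR[OF psi True] a psi True in \<open>auto simp: is_mat_def\<close>)
    also have "\<dots> = (\<Oplus>\<^bsub>S\<^esub>j\<in>{..<q}. \<psi> i j \<otimes>\<^bsub>S\<^esub> a j)"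
      by (rule S.fs_prefix) (use a psi True in \<open>auto simp: is_mat_def\<close>)
    finally show ?thesis using True by simp
  qed simp
qed

end



context splitting begin

lemma vm_zero: "vm (\<lambda>_. \<zero>) = (\<lambda>_. \<zero>\<^bsub>S\<^esub>)" unfolding vm_def by simp

lemma h_f_mult: "x \<in> carrier R \<Longrightarrow> h (f \<otimes> x) = \<zero>\<^bsub>S\<^esub>"
  using f_carr h_f by simp

lemma f_f_mult: "x \<in> carrier R \<Longrightarrow> f \<otimes> (f \<otimes> x) = f \<otimes> x"
  using f_carr f_idem by (simp add: R.m_assoc[symmetric])

lemma img_PR:
  assumes psi: "is_mat S p q \<psi>" and v: "v \<in> fvec R p"
  shows "v \<in> mimg R p (q + p) (PR q \<psi>) \<longleftrightarrow> vm v \<in> mimg S p q \<psi>"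
proof
  assume "v \<in> mimg R p (q + p) (PR q \<psi>)"
  then obtain w where w: "w \<in> fvec R (q + p)" "v = mv R p (q + p) (PR q \<psi>) w" unfolding mimg_def by blast
  have wc: "\<And>j. w j \<in> carrier R" using R.fvec_carr[OF w(1)] .
  have vmc: "\<And>j. vm w j \<in> carrier S" using wc unfolding vm_def by simp
  have "vm v = mv S p (q + p) (\<lambda>i j. h (PR q \<psi> i j)) (vm w)"
    using vm_mv[OF PR_is_mat[OF psi], of w] wc w(2) by simp
  also have "\<dots> = mv S p q \<psi> (vm w)" using mv_hPR[OF psi] vmc by simp
  also have "\<dots> = mv S p q \<psi> (rs S q (vm w))" using S.mv_rs[OF psi, of "vm w"] vmc by simp
  finally show "vm v \<in> mimg S p q \<psi>" unfolding mimg_def using S.rs_fvec[of q "vm w"] vmc by blast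
next
  assume "vm v \<in> mimg S p q \<psi>"
  then obtain a where a: "a \<in> fvec S q" "vm v = mv S p q \<psi> a" unfolding mimg_def by blast
  have ac: "\<And>j. a j \<in> carrier S" using S.fvec_carr[OF a(1)] .
  have vc: "\<And>j. v j \<in> carrier R" using R.fvec_carr[OF v] .
  define w where "w = (\<lambda>j. if j < q then sg (a j) else if j < q + p then v (j - q) else \<zero>)"
  have wc: "\<And>j. w j \<in> carrier R" unfolding w_def using sg_carr ac vc by auto
  have wf: "w \<in> fvec R (q + p)" unfolding fvec_def using wc by (auto simp: w_def)
  have vmc: "\<And>j. vm w j \<in> carrier S" using wc unfolding vm_def by simp
  have rsw: "rs S q (vm w) = a"
  proof
    fix j show "rs S q (vm w) j = a j"
      using a(1) h_sg ac unfolding rs_def vm_def w_def fvec_def by auto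
  qed
  have mc: "\<And>i. mv R p (q + p) (PR q \<psi>) w i \<in> carrier R"
    using R.mv_carr[OF PR_is_mat[OF psi]] wc by blast
  have "mv R p (q + p) (PR q \<psi>) w = v"
  proof (rule vec_split[OF mc vc])
    have "vm (mv R p (q + p) (PR q \<psi>) w) = mv S p (q + p) (\<lambda>i j. h (PR q \<psi> i j)) (vm w)"
      using vm_mv[OF PR_is_mat[OF psi], of w] wc by simp
    also have "\<dots> = mv S p q \<psi> (vm w)" using mv_hPR[OF psi] vmc by simp
    also have "\<dots> = mv S p q \<psi> (rs S q (vm w))" using S.mv_rs[OF psi, of "vm w"] vmc by simp
    also have "\<dots> = vm v" using rsw a(2) by simp
    finally show "vm (mv R p (q + p) (PR q \<psi>) w) = vm v" .
  next
    fix i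
    show "f \<otimes> mv R p (q + p) (PR q \<psi>) w i = f \<otimes> v i"
    proof (cases "i < p")
      case True then show ?thesis using f_mv_PR[OF psi, of w i] wc by (simp add: w_def)
    next
      case False
      then have "v i = \<zero>" using v unfolding fvec_def by simp
      then show ?thesis using f_mv_PR[OF psi, of w i] wc False f_carr by simp
    qed
  qed
  then show "v \<in> mimg R p (q + p) (PR q \<psi>)" unfolding mimg_def using wf by blast
qed

lemma hDR_eq: "(\<And>k. is_mat S (r k) (r (Suc k)) (d k)) \<Longrightarrow> (\<lambda>k i j. h (DR r d k i j)) = dp S r d"
  using h_DR by (intro ext) blast

lemma res_PR:
  assumes "pres_nonzero S p q \<psi>"
  shows "pres_nonzero R p (q + p) (PR q \<psi>)"
proof -
  have psi: "is_mat S p q \<psi>" and ne: "mimg S p q \<psi> \<noteq> fvec S p" using assms unfolding pres_nonzero_def by auto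
  have "mimg S p q \<psi> \<subseteq> fvec S p" unfolding mimg_def using S.mv_fvec[OF psi] S.fvec_carr by blast
  then obtain t where t: "t \<in> fvec S p" "t \<notin> mimg S p q \<psi>" using ne by blast
  have "lv t \<in> fvec R p" using fvec_lv[OF t(1)] .
  moreover have "lv t \<notin> mimg R p (q + p) (PR q \<psi>)" using img_PR[OF psi fvec_lv[OF t(1)]] vm_lv[OF t(1)] t(2) by simp
  ultimately show ?thesis unfolding pres_nonzero_def using PR_is_mat[OF psi] by blast
qed

lemma ext_DR:
  assumes ds: "\<And>k. is_mat S (r k) (r (Suc k)) (d k)" and psi: "is_mat S p q \<psi>"
  shows "ext_nonzero R (rp r) (DR r d) p (q + p) (PR q \<psi>) k \<longleftrightarrow> ext_nonzero S r d p q \<psi> k"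
proof -
  have "ext_nonzero R (rp r) (DR r d) p (q + p) (PR q \<psi>) k \<longleftrightarrow>
        ext_nonzero S (rp r) (\<lambda>k i j. h (DR r d k i j)) p q \<psi> k"
    by (rule ext_transfer) (use DR_is_mat ds img_PR[OF psi] in auto)
  also have "\<dots> \<longleftrightarrow> ext_nonzero S (rp r) (dp S r d) p q \<psi> k" using hDR_eq[of r d, OF ds] by simp
  also have "\<dots> \<longleftrightarrow> ext_nonzero S r d p q \<psi> k" using S.ext_pad[where r=r and d=d, OF ds psi] .
  finally show ?thesis .
qed

end



context splitting begin

lemma mv_DR_vm:
  assumes ds: "\<And>k. is_mat S (r k) (r (Suc k)) (d k)" and a: "\<And>j. a j \<in> carrier R"
  shows "vm (mv R (rp r k) (rp r (Suc k)) (DR r d k) a) = mv S (rp r k) (rp r (Suc k)) (dp S r d k) (vm a)"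
  using vm_mv[OF DR_is_mat[of r k d, OF ds], of a] a hDR_eq[of r d, OF ds] by (simp add: fun_eq_iff)

lemma free_resolution_DR:
  assumes F: "free_resolution S r d"
  shows "free_resolution R (rp r) (DR r d)"
proof -
  have ds: "\<And>k. is_mat S (r k) (r (Suc k)) (d k)" using F unfolding free_resolution_def by blast
  have FP: "free_resolution S (rp r) (dp S r d)" using S.free_resolution_dp[OF F] .
  have exS: "\<And>k. {v \<in> fvec S (rp r (Suc k)). mv S (rp r k) (rp r (Suc k)) (dp S r d k) v = (\<lambda>_. \<zero>\<^bsub>S\<^esub>)}
          = mimg S (rp r (Suc k)) (rp r (Suc (Suc k))) (dp S r d (Suc k))" using FP unfolding free_resolution_def by blast
  have "\<forall>k. {v \<in> fvec R (rp r (Suc k)). mv R (rp r k) (rp r (Suc k)) (DR r d k) v = (\<lambda>_. \<zero>)}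
          = mimg R (rp r (Suc k)) (rp r (Suc (Suc k))) (DR r d (Suc k))"
  proof
    fix k
    let ?n1 = "rp r (Suc k)" and ?n2 = "rp r (Suc (Suc k))"
    have mc: "\<And>k v i. (\<And>j. v j \<in> carrier R) \<Longrightarrow> mv R (rp r k) (rp r (Suc k)) (DR r d k) v i \<in> carrier R"
      using R.mv_carr DR_is_mat ds by blast
    show "{v \<in> fvec R ?n1. mv R (rp r k) ?n1 (DR r d k) v = (\<lambda>_. \<zero>)} = mimg R ?n1 ?n2 (DR r d (Suc k))"
    proof
      show "{v \<in> fvec R ?n1. mv R (rp r k) ?n1 (DR r d k) v = (\<lambda>_. \<zero>)} \<subseteq> mimg R ?n1 ?n2 (DR r d (Suc k))"
      proof
        fix a assume "a \<in> {v \<in> fvec R ?n1. mv R (rp r k) ?n1 (DR r d k) v = (\<lambda>_. \<zero>)}"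
        then have af: "a \<in> fvec R ?n1" and az: "mv R (rp r k) ?n1 (DR r d k) a = (\<lambda>_. \<zero>)" by auto
        have ac: "\<And>j. a j \<in> carrier R" using R.fvec_carr[OF af] .
        have "mv S (rp r k) ?n1 (dp S r d k) (vm a) = (\<lambda>_. \<zero>\<^bsub>S\<^esub>)"
          using mv_DR_vm[where r=r and d=d and k=k and a=a, OF ds ac] az vm_zero by metis
        then have "vm a \<in> mimg S ?n1 ?n2 (dp S r d (Suc k))" using exS[of k] fvec_vm[OF af] by blast
        then obtain b where bf: "b \<in> fvec S ?n2" and ab: "vm a = mv S ?n1 ?n2 (dp S r d (Suc k)) b"
          unfolding mimg_def by blast
        have bc: "\<And>j. b j \<in> carrier S" using S.fvec_carr[OF bf] .
        have fz: "\<And>i. i < r k + cmr r k \<Longrightarrow> f \<otimes> a (?n1 - cc r (Suc k) + i) = \<zero>"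
        proof -
          fix i assume i: "i < r k + cmr r k"
          have "f \<otimes> mv R (rp r k) ?n1 (DR r d k) a i = f \<otimes> a (r (Suc k) + cmr r (Suc k) + i)"
            using f_mv_DR[where r=r and d=d and k=k and v=a and i=i, OF ds] ac i by simp
          moreover have "f \<otimes> mv R (rp r k) ?n1 (DR r d k) a i = \<zero>" using az f_carr by simp
          moreover have "?n1 - cc r (Suc k) = r (Suc k) + cmr r (Suc k)" unfolding rp_def by simp
          ultimately show "f \<otimes> a (?n1 - cc r (Suc k) + i) = \<zero>" by simp
        qed
        define o2 where "o2 = r (Suc (Suc k)) + cmr r (Suc (Suc k))"
        define w where "w = (\<lambda>j. sg (b j) \<oplus> (if o2 \<le> j \<and> j < ?n2 then f \<otimes> a (j - o2) else \<zero>))"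
        have wc: "\<And>j. w j \<in> carrier R" unfolding w_def using sg_carr bc f_carr ac by auto
        have wf: "w \<in> fvec R ?n2" unfolding fvec_def
        proof (intro CollectI conjI allI impI)
          fix i assume "i < ?n2" show "w i \<in> carrier R" using wc .
        next
          fix i assume "?n2 \<le> i" then show "w i = \<zero>" unfolding w_def using bf sg_zero unfolding fvec_def by simp
        qed
        have vmw: "vm w = b" unfolding vm_def w_def
        proof
          fix j show "h (sg (b j) \<oplus> (if o2 \<le> j \<and> j < ?n2 then f \<otimes> a (j - o2) else \<zero>)) = b j"
            using h_sg bc sg_carr f_carr ac h_f_mult by auto
        qed
        have "mv R ?n1 ?n2 (DR r d (Suc k)) w = a"
        proof (rule vec_split[OF mc[OF wc] ac])
          show "vm (mv R ?n1 ?n2 (DR r d (Suc k)) w) = vm a"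
            using mv_DR_vm[where r=r and d=d and k="Suc k" and a=w, OF ds wc] vmw ab by simp
        next
          fix i
          show "f \<otimes> mv R ?n1 ?n2 (DR r d (Suc k)) w i = f \<otimes> a i"
          proof (cases "i < r (Suc k) + cmr r (Suc k)")
            case True
            have j: "o2 \<le> o2 + i" "o2 + i < ?n2" using True unfolding o2_def rp_def by (auto simp: cc_Suc)
            have "f \<otimes> mv R ?n1 ?n2 (DR r d (Suc k)) w i = f \<otimes> w (o2 + i)"
              using f_mv_DR[where r=r and d=d and k="Suc k" and v=w and i=i, OF ds] wc True unfolding o2_def by simp
            also have "\<dots> = f \<otimes> (sg (b (o2 + i)) \<oplus> f \<otimes> a i)" unfolding w_def using j by simp
            also have "\<dots> = f \<otimes> a i"
              using f_sg bc sg_carr f_carr ac f_f_mult by (simp add: R.r_distr)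
            finally show ?thesis .
          next
            case False
            have l: "f \<otimes> mv R ?n1 ?n2 (DR r d (Suc k)) w i = \<zero>"
              using f_mv_DR[where r=r and d=d and k="Suc k" and v=w and i=i, OF ds] wc False by simp
            show ?thesis
            proof (cases "i < ?n1")
              case True
              define i' where "i' = i - (r (Suc k) + cmr r (Suc k))"
              have i': "i' < r k + cmr r k" "i = ?n1 - cc r (Suc k) + i'"
                using True False unfolding i'_def rp_def by (auto simp: cc_Suc)
              then show ?thesis using l fz[OF i'(1)] by simp
            next
              case F2: False
              then have "a i = \<zero>" using af unfolding fvec_def by simp
              then show ?thesis using l f_carr by simp
            qed
          qed
        qed
        then show "a \<in> mimg R ?n1 ?n2 (DR r d (Suc k))" unfolding mimg_def using wf by blast
      qed
    next
      show "mimg R ?n1 ?n2 (DR r d (Suc k)) \<subseteq> {v \<in> fvec R ?n1. mv R (rp r k) ?n1 (DR r d k) v = (\<lambda>_. \<zero>)}"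
      proof
        fix a assume "a \<in> mimg R ?n1 ?n2 (DR r d (Suc k))"
        then obtain w where wf: "w \<in> fvec R ?n2" and aw: "a = mv R ?n1 ?n2 (DR r d (Suc k)) w"
          unfolding mimg_def by blast
        have wc: "\<And>j. w j \<in> carrier R" using R.fvec_carr[OF wf] .
        have af: "a \<in> fvec R ?n1" unfolding aw by (rule R.mv_fvec[OF DR_is_mat[of r "Suc k" d, OF ds]]) (use wc in auto)
        have ac: "\<And>j. a j \<in> carrier R" using R.fvec_carr[OF af] .
        have zc: "\<And>j::nat. (\<lambda>_::nat. \<zero>) j \<in> carrier R" by simp
        have "mv R (rp r k) ?n1 (DR r d k) a = (\<lambda>_. \<zero>)"
        proof (rule vec_split[OF mc[OF ac] zc])
          have va: "vm a = mv S ?n1 ?n2 (dp S r d (Suc k)) (vm w)" using mv_DR_vm[where r=r and d=d and k="Suc k" and a=w, OF ds wc] aw by simp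
          have "vm w \<in> fvec S ?n2" using fvec_vm[OF wf] .
          then have "vm a \<in> mimg S ?n1 ?n2 (dp S r d (Suc k))" unfolding mimg_def va by blast
          then have "mv S (rp r k) ?n1 (dp S r d k) (vm a) = (\<lambda>_. \<zero>\<^bsub>S\<^esub>)" using exS[of k] by blast
          then show "vm (mv R (rp r k) ?n1 (DR r d k) a) = vm (\<lambda>_. \<zero>)"
            using mv_DR_vm[where r=r and d=d and k=k and a=a, OF ds ac] by (simp add: vm_def)
        next
          fix i
          have "f \<otimes> a (r (Suc k) + cmr r (Suc k) + i) = \<zero>"
            using f_mv_DR[where r=r and d=d and k="Suc k" and v=w and i="r (Suc k) + cmr r (Suc k) + i", OF ds] wc aw by simp
          then show "f \<otimes> mv R (rp r k) ?n1 (DR r d k) a i = f \<otimes> (\<lambda>_. \<zero>) i"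
            using f_mv_DR[where r=r and d=d and k=k and v=a and i=i, OF ds] ac f_carr by simp
        qed
        then show "a \<in> {v \<in> fvec R ?n1. mv R (rp r k) ?n1 (DR r d k) v = (\<lambda>_. \<zero>)}" using af by simp
      qed
    qed
  qed
  then show ?thesis unfolding free_resolution_def using DR_is_mat ds by blast
qed

lemma res_DR:
  assumes F: "free_resolution S r d" and N: "res_nonzero S r d"
  shows "res_nonzero R (rp r) (DR r d)"
proof -
  have ds: "\<And>k. is_mat S (r k) (r (Suc k)) (d k)" using F unfolding free_resolution_def by blast
  have ne: "mimg S (r 0) (r 1) (d 0) \<noteq> fvec S (r 0)" using N unfolding res_nonzero_def .
  have "mimg S (r 0) (r 1) (d 0) \<subseteq> fvec S (r 0)" unfolding mimg_def using S.mv_fvec[OF ds[of 0]] S.fvec_carr by auto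
  then obtain t where t: "t \<in> fvec S (r 0)" "t \<notin> mimg S (r 0) (r 1) (d 0)" using ne by blast
  show ?thesis unfolding res_nonzero_def
  proof
    assume eq: "mimg R (rp r 0) (rp r 1) (DR r d 0) = fvec R (rp r 0)"
    have "lv t \<in> fvec R (rp r 0)" using fvec_lv[OF t(1)] by (simp add: rp_0)
    then obtain w where wf: "w \<in> fvec R (rp r 1)" and tw: "lv t = mv R (rp r 0) (rp r 1) (DR r d 0) w"
      using eq unfolding mimg_def by blast
    have wc: "\<And>j. w j \<in> carrier R" using R.fvec_carr[OF wf] .
    have vwc: "\<And>j. vm w j \<in> carrier S" using wc unfolding vm_def by simp
    have "t = mv S (rp r 0) (rp r (Suc 0)) (dp S r d 0) (vm w)"
      using mv_DR_vm[where r=r and d=d and k=0 and a=w, OF ds wc] tw vm_lv[OF t(1)] by simp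
    also have "\<dots> = mv S (r 0) (r (Suc 0)) (d 0) (vm w)"
    proof
      fix i
      show "mv S (rp r 0) (rp r (Suc 0)) (dp S r d 0) (vm w) i = mv S (r 0) (r (Suc 0)) (d 0) (vm w) i"
      proof (cases "i < r 0")
        case True then show ?thesis using S.mvdp_x[where r=r and d=d, OF ds _ True] vwc by simp
      next
        case False then show ?thesis using S.mvdp_out[of r 0 i d "vm w"] by (simp add: rp_0 mv_def)
      qed
    qed
    also have "\<dots> = mv S (r 0) (r (Suc 0)) (d 0) (rs S (r (Suc 0)) (vm w))"
      using S.mv_rs[OF ds[of 0], of "vm w"] vwc by simp
    finally have "t \<in> mimg S (r 0) (r 1) (d 0)" unfolding mimg_def using S.rs_fvec[of "r (Suc 0)" "vm w"] vwc by auto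
    then show False using t(2) by simp
  qed
qed

end


lemma ext_sup_DR:
  assumes sp: "splitting R S h e" and F: "free_resolution S r d" and psi: "is_mat S p q \<psi>"
  shows "ext_sup R (rp r) (splitting.DR R h e r d) p (q + p) (splitting.PR R h e q \<psi>) = ext_sup S r d p q \<psi>"
proof -
  have ds: "\<And>k. is_mat S (r k) (r (Suc k)) (d k)" using F unfolding free_resolution_def by blast
  have "{k. ext_nonzero R (rp r) (splitting.DR R h e r d) p (q + p) (splitting.PR R h e q \<psi>) k}
      = {k. ext_nonzero S r d p q \<psi> k}"
    using splitting.ext_DR[where r=r and d=d, OF sp ds psi] by blast
  then show ?thesis unfolding ext_sup_def by simp
qed

lemma ext_index_le:
  assumes sp: "splitting R S h e"
  shows "ext_index S \<le> ext_index R"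
  unfolding ext_index_def
proof (rule Sup_least)
  fix x assume "x \<in> {ext_sup S r d p q \<psi> | r d p q \<psi>.
      free_resolution S r d \<and> res_nonzero S r d \<and> pres_nonzero S p q \<psi> \<and>
      ext_sup S r d p q \<psi> < \<infinity>}"
  then obtain r d p q \<psi> where x: "x = ext_sup S r d p q \<psi>" and F: "free_resolution S r d"
    and N: "res_nonzero S r d" and Q: "pres_nonzero S p q \<psi>" and fin: "ext_sup S r d p q \<psi> < \<infinity>"
    by blast
  have psi: "is_mat S p q \<psi>" using Q unfolding pres_nonzero_def by blast
  have eq: "ext_sup R (rp r) (splitting.DR R h e r d) p (q + p) (splitting.PR R h e q \<psi>) = x"
    using ext_sup_DR[OF sp F psi] x by simp
  have "x \<in> {ext_sup R r d p q \<psi> | r d p q \<psi>.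
      free_resolution R r d \<and> res_nonzero R r d \<and> pres_nonzero R p q \<psi> \<and>
      ext_sup R r d p q \<psi> < \<infinity>}"
    using splitting.free_resolution_DR[OF sp F] splitting.res_DR[OF sp F N] splitting.res_PR[OF sp Q] eq fin x
    by force
  then show "x \<le> Sup {ext_sup R r d p q \<psi> | r d p q \<psi>.
      free_resolution R r d \<and> res_nonzero R r d \<and> pres_nonzero R p q \<psi> \<and>
      ext_sup R r d p q \<psi> < \<infinity>}" by (rule Sup_upper)
qed

theorem corollary2p3:
  fixes R :: "('a, 'm) ring_scheme" and P :: "'a set"
  assumes "cring R" and "noetherian_ring R" and "artinian_ring R"
    and "finite_ext_index R"
    and "primeideal P R"
  shows "finite_ext_index (localization R P)"
proof -
  interpret A: artloc P R
    by (rule artloc.intro[OF assms(5)]) (rule artloc_axioms.intro[OF assms(3) assms(2)])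
  obtain e where e: "e \<in> carrier R" "e \<otimes>\<^bsub>R\<^esub> e = e" "A.lpi e = A.lpi \<one>\<^bsub>R\<^esub>"
    "\<And>x. x \<in> carrier R \<Longrightarrow> A.lpi x = A.lpi \<zero>\<^bsub>R\<^esub> \<Longrightarrow> e \<otimes>\<^bsub>R\<^esub> x = \<zero>\<^bsub>R\<^esub>"
    using A.idem_exists by blast
  have sp: "splitting R (localization R P) A.lpi e"
  proof (intro splitting.intro splitting_axioms.intro ring_hom_cring.intro ring_hom_cring_axioms.intro)
    show "cring R" by (rule assms(1))
    show "cring (localization R P)" by (rule A.S_cring)
    show "A.lpi \<in> ring_hom R (localization R P)" by (rule A.lpi_hom)
    show "e \<in> carrier R" by (rule e(1))
    show "e \<otimes>\<^bsub>R\<^esub> e = e" by (rule e(2))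
    show "A.lpi e = \<one>\<^bsub>localization R P\<^esub>" using e(3) A.lpi_one by simp
    show "\<And>x. x \<in> carrier R \<Longrightarrow> A.lpi x = \<zero>\<^bsub>localization R P\<^esub> \<Longrightarrow> e \<otimes>\<^bsub>R\<^esub> x = \<zero>\<^bsub>R\<^esub>"
      using e(4) A.lpi_zero by simp
    show "carrier (localization R P) \<subseteq> A.lpi ` carrier R" using A.carrier_S by simp
  qed
  have "ext_index (localization R P) \<le> ext_index R" by (rule ext_index_le[OF sp])
  then show ?thesis using assms(4) unfolding finite_ext_index_def by (meson le_less_trans)
qed

end
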